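(* No single-threshold constant-approximation is possible on the $\overline{\mathcal{G}}$ class: there is no constant $c>0$ such that for every horizon $H\in\overline{\mathcal{G}}$ and every value distribution $\mathcal{D}$ there exists a threshold $\pi$ with $\mathbb{E}X_{\tau_\pi}\ge c\,\mathbb{E}M_H$.
   Context: IID prophet inequality with random horizon: $X$ is a nonnegative integrable random variable with distribution $\mathcal{D}$, $X_1,X_2,\dots$ i.i.d. copies. A horizon is a random variable $H$ supported on a subset of $\mathbb{N}=\{1,2,\dots\}$ with $\mathbb{E}H<\infty$, independent of the $X_i$. A stopping rule $\tau$ is adapted to $\mathcal{F}_i=\sigma(\mathbb{1}_{\{H=0\}},X_1,\dots,\mathbb{1}_{\{H=i-1\}},X_i)$ (the gambler must decide at step $i$ before learning whether $H=i$), the reward is $Y_\tau$ with $Y_i=X_i\mathbb{1}_{\{H\ge i\}}$, $Y_\infty=0$, and $\mathbb{E}X_\tau:=\mathbb{E}Y_\tau$. The prophet gets $\mathbb{E}M_H$, $M_H=\max_{i\le H}X_i$. A single-threshold algorithm with threshold $\pi$ (chosen knowing $\mathcal{D}$ and the law of $H$) is $\tau_\pi=\inf\{i: Y_i\ge\pi\}$. The $\overline{\mathcal{G}}$ class: $H\in\overline{\mathcal{G}}$ iff $\mathbb{E}[t^G]\le\mathbb{E}[t^H]$ for all $t\in(0,1)$, where $G$ is geometric on $\mathbb{N}$ with mean $\mu=\mathbb{E}H$, $\mathbb{P}(G=h)=\frac1\mu(1-\frac1\mu)^{h-1}$. *)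

theory Defs
  imports "HOL-Probability.Probability"
begin

definition horizon :: "nat pmf \<Rightarrow> bool" where
  "horizon H \<longleftrightarrow> set_pmf H \<subseteq> {1..} \<and> integrable (measure_pmf H) real"

text \<open>E[t^G] for G geometric on {1,2,...} with mean mu: sum over h>=1 of (1/mu)(1-1/mu)^(h-1) t^h.\<close>
definition geom_pgf :: "real \<Rightarrow> real \<Rightarrow> real" where
  "geom_pgf mu t = (\<Sum>h. (1/mu) * (1 - 1/mu)^h * t^(Suc h))"

definition Gbar :: "nat pmf \<Rightarrow> bool" where
  "Gbar H \<longleftrightarrow> (\<forall>t\<in>{0<..<1::real}.
     geom_pgf (measure_pmf.expectation H real) t \<le> measure_pmf.expectation H (\<lambda>h. t ^ h))"

definition value_dist :: "real measure \<Rightarrow> bool" where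
  "value_dist D \<longleftrightarrow> prob_space D \<and> sets D = sets borel \<and> (AE x in D. 0 \<le> x) \<and> integrable D (\<lambda>x. x)"

text \<open>Joint law of (X_1, X_2, ...) (index 0 unused) and the independent horizon H.\<close>
definition joint :: "real measure \<Rightarrow> nat pmf \<Rightarrow> ((nat \<Rightarrow> real) \<times> nat) measure" where
  "joint D H = (PiM UNIV (\<lambda>_::nat. D)) \<Otimes>\<^sub>M measure_pmf H"

definition Yv :: "(nat \<Rightarrow> real) \<Rightarrow> nat \<Rightarrow> nat \<Rightarrow> real" where
  "Yv xs h i = (if i \<le> h then xs i else 0)"

definition thr_reward :: "real \<Rightarrow> (nat \<Rightarrow> real) \<times> nat \<Rightarrow> real" where
  "thr_reward p \<omega> = (let xs = fst \<omega>; h = snd \<omega> in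
     if \<exists>i\<ge>1. Yv xs h i \<ge> p then Yv xs h (LEAST i. i \<ge> 1 \<and> Yv xs h i \<ge> p) else 0)"

definition prophet :: "(nat \<Rightarrow> real) \<times> nat \<Rightarrow> real" where
  "prophet \<omega> = Max (fst \<omega> ` {1..snd \<omega>})"

end

theory Submission
  imports Defs "HOL-Analysis.Harmonic_Numbers"
begin


lemma Yv_Suc: "Yv xs (Suc h) (Suc i) = Yv (\<lambda>i. xs (Suc i)) h i"
  by (simp add: Yv_def)

lemma thr_reward_0: "thr_reward p (xs, 0) = 0"
proof -
  let ?P = "\<lambda>i. 1 \<le> i \<and> p \<le> Yv xs 0 i"
  have "?P (LEAST i. ?P i)" if "\<exists>i. ?P i" using that by (rule LeastI_ex)
  hence "Yv xs 0 (LEAST i. ?P i) = 0" if "\<exists>i. ?P i" using that by (auto simp: Yv_def)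
  then show ?thesis unfolding thr_reward_def Let_def fst_conv snd_conv by auto
qed

lemma thr_reward_Suc:
  "thr_reward p (xs, Suc h) = (if p \<le> xs 1 then xs 1 else thr_reward p (\<lambda>i. xs (Suc i), h))"
proof (cases "p \<le> xs 1")
  case True
  have y1: "Yv xs (Suc h) 1 = xs 1" by (simp add: Yv_def)
  have "(LEAST i. 1 \<le> i \<and> p \<le> Yv xs (Suc h) i) = 1"
    by (rule Least_equality) (use True y1 in auto)
  then show ?thesis using True y1 by (auto simp: thr_reward_def Let_def)
next
  case False
  let ?P = "\<lambda>i. 1 \<le> i \<and> p \<le> Yv xs (Suc h) i"
  let ?Q = "\<lambda>i. 1 \<le> i \<and> p \<le> Yv (\<lambda>i. xs (Suc i)) h i"
  have PQ: "?P (Suc m) = ?Q m" for m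
    using False by (cases m) (auto simp: Yv_def)
  have P0: "\<not> ?P 0" by simp
  have ex: "(\<exists>i. ?P i) = (\<exists>i. ?Q i)"
  proof
    assume "\<exists>i. ?P i"
    then obtain i where "?P i" by blast
    with P0 obtain m where "i = Suc m" by (cases i) auto
    with \<open>?P i\<close> PQ show "\<exists>i. ?Q i" by auto
  next
    assume "\<exists>i. ?Q i"
    then obtain m where "?Q m" by blast
    with PQ show "\<exists>i. ?P i" by blast
  qed
  show ?thesis
  proof (cases "\<exists>i. ?Q i")
    case True
    then obtain m where "?Q m" by blast
    hence "?P (Suc m)" using PQ by blast
    hence L: "(LEAST i. ?P i) = Suc (LEAST m. ?P (Suc m))" by (rule Least_Suc) (rule P0)
    have "(\<lambda>m. ?P (Suc m)) = ?Q" using PQ by (rule ext)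
    hence L2: "(LEAST i. ?P i) = Suc (LEAST m. ?Q m)" using L by simp
    have "\<exists>i\<ge>1. p \<le> Yv xs (Suc h) i" using True ex by blast
    moreover have "\<exists>i\<ge>1. p \<le> Yv (\<lambda>i. xs (Suc i)) h i" using True by blast
    ultimately show ?thesis using False L2
      by (simp add: thr_reward_def Let_def Yv_Suc)
  next
    case False2: False
    have n1: "\<not> (\<exists>i\<ge>1. p \<le> Yv xs (Suc h) i)" using False2 ex by blast
    have n2: "\<not> (\<exists>i\<ge>1. p \<le> Yv (\<lambda>i. xs (Suc i)) h i)" using False2 by blast
    have a: "thr_reward p (xs, Suc h) = 0" unfolding thr_reward_def Let_def fst_conv snd_conv
      using n1 by (rule if_not_P)
    have b: "thr_reward p (\<lambda>i. xs (Suc i), h) = 0" unfolding thr_reward_def Let_def fst_conv snd_conv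
      using n2 by (rule if_not_P)
    show ?thesis using False a b by simp
  qed
qed

primrec F :: "real \<Rightarrow> nat \<Rightarrow> (nat \<Rightarrow> real) \<Rightarrow> real" where
  "F p 0 \<omega> = 0"
| "F p (Suc h) \<omega> = (if p \<le> \<omega> 0 then \<omega> 0 else F p h (\<lambda>i. \<omega> (Suc i)))"

lemma thr_reward_F: "thr_reward p (xs, h) = F p h (\<lambda>i. xs (Suc i))"
  by (induction h arbitrary: xs) (simp_all add: thr_reward_0 thr_reward_Suc)




abbreviation SS :: "real measure \<Rightarrow> (nat \<Rightarrow> real) measure" where
  "SS D \<equiv> PiM UNIV (\<lambda>_::nat. D)"

abbreviation shift :: "(nat \<Rightarrow> real) \<Rightarrow> (nat \<Rightarrow> real)" where
  "shift \<omega> \<equiv> (\<lambda>i. \<omega> (Suc i))"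

lemma shift_measurable: "shift \<in> measurable (SS D) (SS D)"
  by (rule measurable_PiM_single') (auto simp: space_PiM)

lemma comp_borel: "sets D = sets borel \<Longrightarrow> (\<lambda>\<omega>. \<omega> i) \<in> borel_measurable (SS D)"
  using measurable_component_singleton[of i UNIV "\<lambda>_. D"] measurable_cong_sets[OF refl, of D borel "SS D"]
  by simp

lemma F_measurable: "sets D = sets borel \<Longrightarrow> F p h \<in> borel_measurable (SS D)"
proof (induction h)
  case 0 then show ?case by simp
next
  case (Suc h)
  have a: "(\<lambda>\<omega>. F p h (shift \<omega>)) \<in> borel_measurable (SS D)"
    using measurable_comp[OF shift_measurable Suc(1)[OF Suc(2)]] by (simp add: comp_def)
  have b: "(\<lambda>\<omega>. \<omega> 0) \<in> borel_measurable (SS D)" using comp_borel[OF Suc(2)] .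
  have "(\<lambda>\<omega>. \<omega> 0) -` {p..} \<inter> space (SS D) \<in> sets (SS D)"
    by (rule measurable_sets[OF b]) simp
  moreover have "(\<lambda>\<omega>. \<omega> 0) -` {p..} \<inter> space (SS D) = {\<omega> \<in> space (SS D). p \<le> \<omega> 0}" by auto
  ultimately have c: "{\<omega> \<in> space (SS D). p \<le> \<omega> 0} \<in> sets (SS D)" by simp
  show ?case unfolding F.simps
    by (rule measurable_If[OF b a c])
qed

lemma snd_count: "snd \<in> measurable (M \<Otimes>\<^sub>M measure_pmf H) (count_space UNIV)"
  using measurable_snd[of M "measure_pmf H"] measurable_cong_sets[OF refl, of "measure_pmf H" "count_space UNIV" "M \<Otimes>\<^sub>M measure_pmf H"]
  by simp

lemma fst_comp_borel: "sets D = sets borel \<Longrightarrow> (\<lambda>x. fst x i) \<in> borel_measurable (SS D \<Otimes>\<^sub>M M)"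
  using measurable_comp[OF measurable_fst comp_borel[of D i]] by (simp add: comp_def)

lemma thr_reward_measurable:
  assumes sD: "sets D = sets borel"
  shows "thr_reward p \<in> borel_measurable (SS D \<Otimes>\<^sub>M measure_pmf H)"
proof -
  have "(\<lambda>x. F p (snd x) (shift (fst x))) \<in> borel_measurable (SS D \<Otimes>\<^sub>M measure_pmf H)"
  proof (rule measurable_compose_countable'[where f="\<lambda>h x. F p h (shift (fst x))" and I=UNIV])
    fix h :: nat
    have "(\<lambda>x. F p h (shift x)) \<in> borel_measurable (SS D)"
      using measurable_comp[OF shift_measurable F_measurable[OF sD]] by (simp add: comp_def)
    from measurable_comp[OF measurable_fst this]
    show "(\<lambda>x. F p h (shift (fst x))) \<in> borel_measurable (SS D \<Otimes>\<^sub>M measure_pmf H)"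
      by (simp add: comp_def)
  qed (auto intro: snd_count)
  moreover have "thr_reward p = (\<lambda>x. F p (snd x) (shift (fst x)))"
    by (rule ext) (metis prod.collapse thr_reward_F)
  ultimately show ?thesis by simp
qed

lemma prophet_measurable:
  assumes sD: "sets D = sets borel"
  shows "prophet \<in> borel_measurable (SS D \<Otimes>\<^sub>M measure_pmf H)"
proof -
  have "(\<lambda>x. (\<lambda>h x. Max ((\<lambda>i. fst x i) ` {1..h})) (snd x) x) \<in> borel_measurable (SS D \<Otimes>\<^sub>M measure_pmf H)"
  proof (rule measurable_compose_countable'[where f="\<lambda>h x. Max ((\<lambda>i. fst x i) ` {1..h})" and g=snd and I=UNIV])
    fix h :: nat
    show "(\<lambda>x. Max ((\<lambda>i. fst x i) ` {1..h})) \<in> borel_measurable (SS D \<Otimes>\<^sub>M measure_pmf H)"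
      by (rule borel_measurable_Max) (auto intro: fst_comp_borel[OF sD])
  qed (auto intro: snd_count)
  moreover have "prophet = (\<lambda>x. (\<lambda>h x. Max ((\<lambda>i. fst x i) ` {1..h})) (snd x) x)"
    by (rule ext) (simp add: prophet_def)
  ultimately show ?thesis by simp
qed

lemma geo_sum_le: "(2::real) \<le> M \<Longrightarrow> (\<Sum>l\<le>n. M^l) \<le> 2 * M^n"
proof (induction n)
  case 0 then show ?case by simp
next
  case (Suc n)
  have "2 * M^n \<le> M * M^n" using Suc.prems by (intro mult_right_mono) auto
  moreover have "(\<Sum>l\<le>Suc n. M^l) = (\<Sum>l\<le>n. M^l) + M * M^n" by simp
  moreover have "2 * M^Suc n = 2 * (M * M^n)" by simp
  ultimately show ?case using Suc.IH Suc.prems by linarith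
qed

lemma filt_sum_le: "(2::real) \<le> M \<Longrightarrow> (\<Sum>l\<le>n. if M^l \<le> P then M^l else 0) \<le> 2 * max P 0"
proof (induction n)
  case 0 then show ?case by (cases "1 \<le> P") auto
next
  case (Suc n)
  show ?case
  proof (cases "M^Suc n \<le> P")
    case True
    have "(\<Sum>l\<le>Suc n. if M^l \<le> P then M^l else 0) \<le> (\<Sum>l\<le>Suc n. M^l)"
      using Suc.prems by (intro sum_mono) auto
    also have "\<dots> \<le> 2 * M^Suc n" by (rule geo_sum_le[OF Suc.prems])
    also have "\<dots> \<le> 2 * max P 0" using True by simp
    finally show ?thesis .
  next
    case False
    then show ?thesis using Suc by simp
  qed
qed

lemma prophet_pw:
  fixes M :: real and N :: nat and xs :: "nat \<Rightarrow> real"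
  assumes "1 \<le> N" "2 \<le> M"
  shows "(1/2) * (\<Sum>l\<in>{k..K}. M^l * indicator {xs. \<exists>i\<in>{1..N}. M^l \<le> xs i} xs) \<le> max (Max (xs ` {1..N})) 0"
proof -
  let ?P = "Max (xs ` {1..N})"
  have "(\<Sum>l\<in>{k..K}. M^l * indicator {xs. \<exists>i\<in>{1..N}. M^l \<le> xs i} xs) \<le> (\<Sum>l\<in>{k..K}. if M^l \<le> ?P then M^l else 0)"
  proof (rule sum_mono)
    fix l
    show "M^l * indicator {xs. \<exists>i\<in>{1..N}. M^l \<le> xs i} xs \<le> (if M^l \<le> ?P then M^l else 0)"
    proof (cases "\<exists>i\<in>{1..N}. M^l \<le> xs i")
      case True
      then obtain i where i: "i \<in> {1..N}" "M^l \<le> xs i" by blast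
      have "xs i \<le> ?P" by (rule Max_ge) (use i(1) in simp_all)
      hence "M^l \<le> ?P" using i(2) by linarith
      then show ?thesis using True by (simp add: indicator_def)
    next
      case False
      then show ?thesis using assms by (auto simp: indicator_def)
    qed
  qed
  also have "\<dots> \<le> (\<Sum>l\<le>K. if M^l \<le> ?P then M^l else 0)"
    using assms by (intro sum_mono2) auto
  also have "\<dots> \<le> 2 * max ?P 0" by (rule filt_sum_le[OF assms(2)])
  finally show ?thesis by simp
qed

lemma one_minus_pow_ge:
  fixes q :: real
  assumes "0 \<le> q" "q \<le> 1" "real N * q \<le> 1"
  shows "real N * q / 2 \<le> 1 - (1-q)^N"
proof -
  have "1 + real N * q \<le> (1+q)^N" by (rule Bernoulli_inequality) (use assms in simp)
  hence "(1-q)^N * (1 + real N * q) \<le> (1-q)^N * (1+q)^N"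
    using assms by (intro mult_left_mono) auto
  also have "\<dots> = (1 - q^2)^N" by (simp add: power_mult_distrib[symmetric] power2_eq_square algebra_simps)
  also have "\<dots> \<le> 1" using assms by (intro power_le_one) (auto simp: power2_eq_square mult_le_one)
  finally have a: "(1-q)^N * (1 + real N * q) \<le> 1" .
  have b: "0 \<le> (1-q)^N" using assms by simp
  have c: "0 \<le> real N * q" using assms by simp
  define x where "x = real N * q"
  have x0: "0 \<le> x" "x \<le> 1" using assms c by (auto simp: x_def)
  have d: "0 \<le> x - x * x" using x0 mult_left_le_one_le[of x x] by linarith
  have e: "(1 + x) * (1 - x / 2) = 1 + (x - x * x) / 2" by (simp add: field_simps)
  have f: "1 \<le> (1 + x) * (1 - x / 2)" unfolding e using d by simp
  have "(1-q)^N = (1-q)^N * 1" by simp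
  also have "\<dots> \<le> (1-q)^N * ((1 + x) * (1 - x / 2))" using b f by (intro mult_left_mono) auto
  also have "\<dots> = ((1-q)^N * (1 + x)) * (1 - x / 2)" by (simp add: mult.assoc)
  also have "\<dots> \<le> 1 * (1 - x / 2)" using a x0 by (intro mult_right_mono) (auto simp: x_def)
  finally have "(1-q)^N \<le> 1 - real N * q / 2" by (simp add: x_def)
  then show ?thesis by simp
qed

context
  fixes D :: "real measure"
  assumes PD: "prob_space D" and sD: "sets D = sets borel"
begin

interpretation sequence_space D
  by (simp add: sequence_space_def product_prob_space_def product_prob_space_axioms_def
      product_sigma_finite_def PD prob_space_imp_sigma_finite)

lemma PS: "prob_space (SS D)" by (rule prob_space_PiM) (simp add: PD)

lemma PS1: "emeasure (SS D) (space (SS D)) = 1" using prob_space.emeasure_space_1[OF PS] .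

lemma to_D: "f \<in> measurable borel N \<Longrightarrow> f \<in> measurable D N"
  by (subst measurable_cong_sets[OF sD refl])

lemma shift_case_nat[simp]: "shift (case_nat s \<omega>) = \<omega>"
  by (rule ext) simp

lemma cn_meas: "(\<lambda>x. case_nat (fst x) (snd x)) \<in> measurable (D \<Otimes>\<^sub>M SS D) (SS D)"
  by (rule measurable_case_nat') (rule measurable_fst, rule measurable_snd)

lemma iter_eq: "distr (D \<Otimes>\<^sub>M SS D) (SS D) (\<lambda>x. case_nat (fst x) (snd x)) = SS D"
  using PiM_iter by (simp add: split_beta')

lemma nn_iter:
  assumes g: "g \<in> borel_measurable (SS D)"
  shows "(\<integral>\<^sup>+ xs. g xs \<partial>SS D) = (\<integral>\<^sup>+ s. \<integral>\<^sup>+ \<omega>. g (case_nat s \<omega>) \<partial>SS D \<partial>D)"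
proof -
  have "(\<integral>\<^sup>+ xs. g xs \<partial>SS D) = (\<integral>\<^sup>+ xs. g xs \<partial>distr (D \<Otimes>\<^sub>M SS D) (SS D) (\<lambda>x. case_nat (fst x) (snd x)))"
    by (simp add: iter_eq)
  also have "\<dots> = (\<integral>\<^sup>+ x. g (case_nat (fst x) (snd x)) \<partial>(D \<Otimes>\<^sub>M SS D))"
    by (rule nn_integral_distr[OF cn_meas]) (simp add: g)
  also have "\<dots> = (\<integral>\<^sup>+ s. \<integral>\<^sup>+ \<omega>. g (case_nat s \<omega>) \<partial>SS D \<partial>D)"
  proof -
    have "(\<lambda>x. g (case_nat (fst x) (snd x))) \<in> borel_measurable (D \<Otimes>\<^sub>M SS D)"
      using measurable_comp[OF cn_meas g] by (simp add: comp_def)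
    from nn_integral_fst[OF this, symmetric] show ?thesis by simp
  qed
  finally show ?thesis .
qed

lemma nn_shift:
  assumes g: "g \<in> borel_measurable (SS D)"
  shows "(\<integral>\<^sup>+ xs. g (shift xs) \<partial>SS D) = (\<integral>\<^sup>+ xs. g xs \<partial>SS D)"
proof -
  have gs: "(\<lambda>xs. g (shift xs)) \<in> borel_measurable (SS D)"
    using measurable_comp[OF shift_measurable g] by (simp add: comp_def)
  have "(\<integral>\<^sup>+ xs. g (shift xs) \<partial>SS D) = (\<integral>\<^sup>+ s. \<integral>\<^sup>+ \<omega>. g \<omega> \<partial>SS D \<partial>D)"
    by (subst nn_iter[OF gs]) simp
  also have "\<dots> = (\<integral>\<^sup>+ xs. g xs \<partial>SS D)"
    using prob_space.emeasure_space_1[OF PD] by simp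
  finally show ?thesis .
qed

lemma nn_rec:
  "(\<integral>\<^sup>+ \<omega>. ennreal (F p (Suc h) \<omega>) \<partial>SS D) =
     (\<integral>\<^sup>+ x. ennreal (if p \<le> x then x else 0) \<partial>D) + emeasure D {x. x < p} * (\<integral>\<^sup>+ \<omega>. ennreal (F p h \<omega>) \<partial>SS D)"
proof -
  have m: "(\<lambda>\<omega>. ennreal (F p (Suc h) \<omega>)) \<in> borel_measurable (SS D)"
    using measurable_comp[OF F_measurable[OF sD] measurable_ennreal, of p "Suc h"] by (simp add: comp_def del: F.simps)
  have "(\<integral>\<^sup>+ \<omega>. ennreal (F p (Suc h) \<omega>) \<partial>SS D) =
        (\<integral>\<^sup>+ s. \<integral>\<^sup>+ \<omega>. ennreal (if p \<le> s then s else F p h \<omega>) \<partial>SS D \<partial>D)"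
    by (subst nn_iter[OF m]) (intro nn_integral_cong, simp)
  also have "\<dots> = (\<integral>\<^sup>+ s. ennreal (if p \<le> s then s else 0) + indicator {x. x < p} s * (\<integral>\<^sup>+ \<omega>. ennreal (F p h \<omega>) \<partial>SS D) \<partial>D)"
    using prob_space.emeasure_space_1[OF PD] PS1 by (intro nn_integral_cong) (auto simp: indicator_def)
  also have "\<dots> = (\<integral>\<^sup>+ x. ennreal (if p \<le> x then x else 0) \<partial>D) + (\<integral>\<^sup>+ s. indicator {x. x < p} s * (\<integral>\<^sup>+ \<omega>. ennreal (F p h \<omega>) \<partial>SS D) \<partial>D)"
  proof (rule nn_integral_add)
    have "(\<lambda>x. ennreal (if p \<le> x then x else 0)) \<in> borel_measurable borel" by measurable
    then show "(\<lambda>x. ennreal (if p \<le> x then x else 0)) \<in> borel_measurable D"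
      by (rule to_D)
    have "(\<lambda>s. indicator {x. x < p} s * (\<integral>\<^sup>+ \<omega>. ennreal (F p h \<omega>) \<partial>SS D)) \<in> borel_measurable borel"
      by measurable
    then show "(\<lambda>s. indicator {x. x < p} s * (\<integral>\<^sup>+ \<omega>. ennreal (F p h \<omega>) \<partial>SS D)) \<in> borel_measurable D"
      by (rule to_D)
  qed
  also have "(\<integral>\<^sup>+ s. indicator {x. x < p} s * (\<integral>\<^sup>+ \<omega>. ennreal (F p h \<omega>) \<partial>SS D) \<partial>D) = emeasure D {x. x < p} * (\<integral>\<^sup>+ \<omega>. ennreal (F p h \<omega>) \<partial>SS D)"
  proof -
    have "{x. x < p} \<in> sets D" using sD by simp
    then show ?thesis by (subst nn_integral_multc) auto
  qed
  finally show ?thesis .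
qed

lemma nn_F_closed:
  "(\<integral>\<^sup>+ \<omega>. ennreal (F p h \<omega>) \<partial>SS D) =
     (\<integral>\<^sup>+ x. ennreal (if p \<le> x then x else 0) \<partial>D) * (\<Sum>i<h. emeasure D {x. x < p} ^ i)"
proof (induction h)
  case 0 then show ?case by simp
next
  case (Suc h)
  show ?case
    unfolding nn_rec Suc sum.lessThan_Suc_shift
    by (simp add: sum_distrib_left algebra_simps)
qed

lemma nn_reward_slice:
  "(\<integral>\<^sup>+ xs. ennreal (thr_reward p (xs, h)) \<partial>SS D) =
     (\<integral>\<^sup>+ x. ennreal (if p \<le> x then x else 0) \<partial>D) * (\<Sum>i<h. emeasure D {x. x < p} ^ i)"
proof -
  have m: "(\<lambda>\<omega>. ennreal (F p h \<omega>)) \<in> borel_measurable (SS D)"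
    using measurable_comp[OF F_measurable[OF sD] measurable_ennreal, of p h] by (simp add: comp_def)
  show ?thesis
    unfolding thr_reward_F nn_shift[OF m] nn_F_closed ..
qed

lemma AE_S:
  assumes "AE x in D. P x"
  shows "AE xs in SS D. \<forall>i. P (xs i)"
  unfolding AE_all_countable using AE_component[OF _ assms] by simp

lemma measure_all_less:
  "measure (SS D) {xs. \<forall>i\<in>{1..N}. xs i < v} = measure D {x. x < v} ^ N"
proof -
  have sp: "space (SS D) = UNIV" using sD sets_eq_imp_space_eq[OF sD] by (simp add: space_PiM)
  have "emeasure (SS D) {xs \<in> space (SS D). \<forall>i\<in>{1..N}. xs i \<in> {x. x < v}} = (\<Prod>i\<in>{1..N}. emeasure D {x. x < v})"
    by (rule emeasure_PiM_Collect) (auto simp: sD)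
  then have "emeasure (SS D) {xs. \<forall>i\<in>{1..N}. xs i < v} = emeasure D {x. x < v} ^ N"
    using sp by simp
  moreover have "emeasure D {x. x < v} = ennreal (measure D {x. x < v})"
    by (rule M.emeasure_eq_measure)
  ultimately have "emeasure (SS D) {xs. \<forall>i\<in>{1..N}. xs i < v} = ennreal (measure D {x. x < v} ^ N)"
    by (simp add: ennreal_power)
  then show ?thesis
    by (simp add: measure_def)
qed

lemma space_SS: "space (SS D) = UNIV"
  using sets_eq_imp_space_eq[OF sD] by (simp add: space_PiM)

lemma sets_all_less: "1 \<le> N \<Longrightarrow> {xs. \<forall>i\<in>{1..N}. xs i < v} \<in> sets (SS D)"
proof -
  assume N: "1 \<le> N"
  have "(\<Inter>i\<in>{1..N}. (\<lambda>xs. xs i) -` {..<v} \<inter> space (SS D)) \<in> sets (SS D)"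
    using N by (intro sets.finite_INT) (auto intro!: measurable_sets[OF comp_borel[OF sD]])
  moreover have "(\<Inter>i\<in>{1..N}. (\<lambda>xs. xs i) -` {..<v} \<inter> space (SS D)) = {xs. \<forall>i\<in>{1..N}. xs i < v}"
    using N by (auto simp: space_SS)
  ultimately show ?thesis by simp
qed

lemma prophet_slice_lb:
  fixes M :: real
  assumes N: "1 \<le> N" and M: "2 \<le> M"
  shows "ennreal ((1/2) * (\<Sum>l\<in>{k..K}. M^l * (1 - measure D {x. x < M^l} ^ N)))
           \<le> (\<integral>\<^sup>+ xs. ennreal (Max (xs ` {1..N})) \<partial>SS D)"
proof -
  define E where "E l = {xs. \<exists>i\<in>{1..N}. M^l \<le> xs i}" for l
  have EC: "E l = space (SS D) - {xs. \<forall>i\<in>{1..N}. xs i < M^l}" for l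
    by (auto simp: E_def space_SS not_less)
  have Es: "E l \<in> sets (SS D)" for l
    unfolding EC using sets_all_less[OF N] by auto
  have mE: "measure (SS D) (E l) = 1 - measure D {x. x < M^l} ^ N" for l
    unfolding EC using P.prob_compl[OF sets_all_less[OF N]] measure_all_less by simp
  define g where "g xs = (1/2) * (\<Sum>l\<in>{k..K}. M^l * indicator (E l) xs)" for xs
  have intl: "integrable (SS D) (\<lambda>xs. M^l * indicator (E l) xs)" for l
    by (rule integrable_mult_right, rule integrable_real_indicator[OF Es]) (simp add: less_top[symmetric])
  have gi: "integrable (SS D) g"
  proof -
    show ?thesis using intl unfolding g_def
      using Bochner_Integration.integrable_sum[where I="{k..K}" and f="\<lambda>l xs. M^l * indicator (E l) xs"]
      by (intro integrable_mult_right) simp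
  qed
  have gint: "integral\<^sup>L (SS D) g = (1/2) * (\<Sum>l\<in>{k..K}. M^l * (1 - measure D {x. x < M^l} ^ N))"
  proof -
    have il: "integral\<^sup>L (SS D) (\<lambda>xs. M^l * indicator (E l) xs) = M^l * (1 - measure D {x. x < M^l} ^ N)" for l
      using mE[of l] Es[of l] by (simp add: space_SS)
    have "integral\<^sup>L (SS D) g = (1/2) * integral\<^sup>L (SS D) (\<lambda>xs. \<Sum>l\<in>{k..K}. M^l * indicator (E l) xs)"
      unfolding g_def by (rule integral_mult_right_zero)
    also have "\<dots> = (1/2) * (\<Sum>l\<in>{k..K}. integral\<^sup>L (SS D) (\<lambda>xs. M^l * indicator (E l) xs))"
      by (subst Bochner_Integration.integral_sum) (rule intl, rule refl)
    finally show ?thesis by (simp only: il)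
  qed
  have g0: "AE xs in SS D. 0 \<le> g xs"
    using M by (intro AE_I2) (auto simp: g_def intro!: sum_nonneg)
  have "ennreal (integral\<^sup>L (SS D) g) = (\<integral>\<^sup>+ xs. ennreal (g xs) \<partial>SS D)"
    by (rule nn_integral_eq_integral[OF gi g0, symmetric])
  also have "\<dots> \<le> (\<integral>\<^sup>+ xs. ennreal (Max (xs ` {1..N})) \<partial>SS D)"
  proof (rule nn_integral_mono)
    fix xs
    have "g xs \<le> max (Max (xs ` {1..N})) 0"
      unfolding g_def E_def by (rule prophet_pw[OF N M])
    then show "ennreal (g xs) \<le> ennreal (Max (xs ` {1..N}))"
      by (metis ennreal_leI ennreal_max_0 max.commute)
  qed
  finally show ?thesis unfolding gint .
qed

lemma nn_joint:
  assumes g: "g \<in> borel_measurable (SS D \<Otimes>\<^sub>M measure_pmf H)"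
  shows "(\<integral>\<^sup>+ x. g x \<partial>joint D H) = (\<integral>\<^sup>+ h. (\<integral>\<^sup>+ xs. g (xs, h) \<partial>SS D) \<partial>measure_pmf H)"
proof -
  interpret pair_sigma_finite "SS D" "measure_pmf H"
    by (simp add: pair_sigma_finite_def prob_space_imp_sigma_finite PS
        prob_space_imp_sigma_finite[OF prob_space_measure_pmf])
  show ?thesis unfolding joint_def by (rule nn_integral_snd[OF g, symmetric])
qed

end




definition fpmf :: "nat \<Rightarrow> (nat \<Rightarrow> real) \<Rightarrow> nat pmf" where
  "fpmf K w = embed_pmf (\<lambda>z. if z \<le> K then w z else 0)"

context
  fixes K :: nat and w :: "nat \<Rightarrow> real"
  assumes wnn: "\<And>z. z \<le> K \<Longrightarrow> 0 \<le> w z" and wsum: "(\<Sum>z\<le>K. w z) = 1"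
begin

lemma pmf_fpmf: "pmf (fpmf K w) z = (if z \<le> K then w z else 0)"
  unfolding fpmf_def
proof (rule pmf_embed_pmf)
  show "0 \<le> (if x \<le> K then w x else 0)" for x using wnn by simp
  have "(\<integral>\<^sup>+ x. ennreal (if x \<le> K then w x else 0) \<partial>count_space UNIV) = (\<Sum>x\<le>K. ennreal (if x \<le> K then w x else 0))"
    by (rule nn_integral_count_space') auto
  also have "\<dots> = ennreal (\<Sum>x\<le>K. w x)"
    using wnn by (subst sum_ennreal) auto
  finally show "(\<integral>\<^sup>+ x. ennreal (if x \<le> K then w x else 0) \<partial>count_space UNIV) = 1"
    using wsum by simp
qed

lemma set_fpmf: "set_pmf (fpmf K w) \<subseteq> {..K}"
  by (auto simp: set_pmf_iff pmf_fpmf split: if_splits)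

lemma finite_set_fpmf: "finite (set_pmf (fpmf K w))"
  using set_fpmf finite_subset by blast

lemma nn_integral_fpmf: "(\<integral>\<^sup>+ z. f z \<partial>measure_pmf (fpmf K w)) = (\<Sum>z\<le>K. ennreal (w z) * f z)"
proof -
  have "(\<integral>\<^sup>+ z. f z \<partial>measure_pmf (fpmf K w)) = (\<Sum>z\<in>{..K}. f z * ennreal (pmf (fpmf K w) z))"
    by (rule nn_integral_measure_pmf_support) (use set_fpmf in auto)
  also have "\<dots> = (\<Sum>z\<le>K. ennreal (w z) * f z)"
    by (intro sum.cong) (auto simp: pmf_fpmf mult.commute)
  finally show ?thesis .
qed

lemma integral_fpmf: "(\<integral> z. f z \<partial>measure_pmf (fpmf K w)) = (\<Sum>z\<le>K. w z * f z)"
proof -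
  have "(\<integral> z. f z \<partial>measure_pmf (fpmf K w)) = (\<Sum>z\<in>{..K}. f z * pmf (fpmf K w) z)"
    by (rule integral_measure_pmf_real) (use set_fpmf in auto)
  also have "\<dots> = (\<Sum>z\<le>K. w z * f z)"
    by (intro sum.cong) (auto simp: pmf_fpmf mult.commute)
  finally show ?thesis .
qed

end

lemma sum_split0: "(\<Sum>k\<le>(K::nat). f k) = f 0 + (\<Sum>k\<in>{1..K}. (f k :: real))"
proof -
  have "{..K} = insert 0 {1..K}" by auto
  then show ?thesis by simp
qed

lemma L0:
  fixes s :: real
  assumes "0 \<le> s" "s \<le> 1" "1 \<le> n"
  shows "1 - (1-s)^n \<le> 2 * real n * s / (2 + (real n - 1) * s)"
  using assms(3)
proof (induction n rule: dec_induct)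
  case base then show ?case by simp
next
  case (step n)
  have pos: "0 < 2 + (real n - 1) * s" using assms step.hyps by (smt (verit) mult_nonneg_nonneg of_nat_0_le_iff of_nat_1 of_nat_mono)
  have pos2: "0 < 2 + real n * s" using assms by (simp add: add_pos_nonneg)
  have "1 - (1-s)^Suc n = s + (1 - s) * (1 - (1-s)^n)" by (simp add: algebra_simps)
  also have "\<dots> \<le> s + (1 - s) * (2 * n * s / (2 + (real n - 1) * s))"
    using step.IH assms by (intro add_left_mono mult_left_mono) auto
  also have "\<dots> \<le> 2 * real (Suc n) * s / (2 + (real (Suc n) - 1) * s)"
  proof -
    have "(s + (1 - s) * (2 * n * s / (2 + (real n - 1) * s))) * ((2 + (real n - 1) * s) * (2 + n * s))
          = s * (2 + 2 * n - (n + 1) * s) * (2 + n * s)"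
      using pos by (simp add: field_simps)
    also have "\<dots> \<le> s * (2 * (n + 1)) * (2 + (real n - 1) * s)"
    proof -
      have "(2 + 2 * n - (n + 1) * s) * (2 + n * s) = (2 * (n + 1)) * (2 + (real n - 1) * s) - (n + 1) * n * s * s"
        by (simp add: algebra_simps)
      moreover have "0 \<le> (n + 1) * n * s * s" using assms by simp
      ultimately have "(2 + 2 * n - (n + 1) * s) * (2 + n * s) \<le> (2 * (n + 1)) * (2 + (real n - 1) * s)" by linarith
      then show ?thesis using assms by (simp add: mult.assoc mult_left_mono)
    qed
    finally have "(s + (1 - s) * (2 * n * s / (2 + (real n - 1) * s))) * ((2 + (real n - 1) * s) * (2 + n * s))
        \<le> s * (2 * (n + 1)) * (2 + (real n - 1) * s)" .
    then have "s + (1 - s) * (2 * n * s / (2 + (real n - 1) * s)) \<le> s * (2 * (n + 1)) * (2 + (real n - 1) * s) / ((2 + (real n - 1) * s) * (2 + n * s))"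
      using pos pos2 by (simp add: le_divide_eq)
    also have "\<dots> = ((2 + (real n - 1) * s) * (s * (2 * (n + 1)))) / ((2 + (real n - 1) * s) * (2 + n * s))"
      by (simp add: mult.commute)
    also have "\<dots> = (s * (2 * (n + 1))) / (2 + n * s)"
      by (rule nonzero_mult_divide_mult_cancel_left) (use pos in simp)
    also have "\<dots> = 2 * real (Suc n) * s / (2 + (real (Suc n) - 1) * s)"
      by (simp add: algebra_simps)
    finally show ?thesis .
  qed
  finally show ?case .
qed

lemma L1:
  fixes s :: real
  assumes "0 \<le> s" "s \<le> 1" "2 \<le> n"
  shows "1 - (1-s)^n \<le> 4 * real n * s / (4 + real n * s)"
proof -
  have "1 - (1-s)^n \<le> 2 * real n * s / (2 + (real n - 1) * s)"
    by (rule L0) (use assms in auto)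
  also have "\<dots> \<le> 2 * real n * s / (2 + real n * s / 2)"
  proof (rule divide_left_mono)
    have "real n / 2 \<le> real n - 1" using assms by simp
    then have "real n * s / 2 \<le> (real n - 1) * s" using assms mult_right_mono[of "real n / 2" "real n - 1" s] by simp
    then show "2 + real n * s / 2 \<le> 2 + (real n - 1) * s" by simp
    show "0 \<le> 2 * real n * s" using assms by simp
    have "0 < 2 + real n * s / 2" using assms by (simp add: add_pos_nonneg)
    moreover have "0 \<le> real n * s / 2" using assms by simp
    moreover have "0 < 2 + (real n - 1) * s" using \<open>0 \<le> real n * s / 2\<close> \<open>real n * s / 2 \<le> (real n - 1) * s\<close>
      by linarith
    ultimately show "0 < (2 + (real n - 1) * s) * (2 + real n * s / 2)" by simp
  qed
  also have "\<dots> = 4 * real n * s / (4 + real n * s)" by (simp add: field_simps)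
  finally show ?thesis .
qed

lemma tangent:
  fixes x x0 :: real
  assumes "0 \<le> x" "0 \<le> x0"
  shows "4 * x / (4 + x) \<le> 4 * x0 / (4 + x0) + 16 * (x - x0) / (4 + x0)^2"
proof -
  have p1: "0 < 4 + x" "0 < 4 + x0" using assms by auto
  define a where "a = 4 + x"
  define b where "b = 4 + x0"
  have a0: "a \<noteq> 0" "b \<noteq> 0" using p1 by (auto simp: a_def b_def)
  have P: "4*x0*a*b + 16*(x-x0)*a - 4*x*b^2 = 16*(x-x0)^2"
    unfolding a_def b_def by (simp add: algebra_simps power2_eq_square)
  have Q: "4 * x0 / b + 16 * (x - x0) / b^2 - 4 * x / a = (4*x0*a*b + 16*(x-x0)*a - 4*x*b^2) / (a * b^2)"
    using a0 by (simp add: field_simps power2_eq_square)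
  have "4 * x0 / (4 + x0) + 16 * (x - x0) / (4 + x0)^2 - 4 * x / (4 + x) = 16 * (x - x0)^2 / ((4 + x) * (4 + x0)^2)"
    using Q P by (simp add: a_def b_def)
  moreover have "0 \<le> 16 * (x - x0)^2 / ((4 + x) * (4 + x0)^2)" using p1 by simp
  ultimately show ?thesis by linarith
qed

lemma gbar_core:
  fixes w :: "nat \<Rightarrow> real" and N :: "nat \<Rightarrow> nat" and K :: nat and t :: real
  assumes wnn: "\<And>k. k \<le> K \<Longrightarrow> 0 \<le> w k" and wsum: "(\<Sum>k\<le>K. w k) = 1"
    and N0: "N 0 = 1" and N3: "\<And>k. 1 \<le> k \<Longrightarrow> k \<le> K \<Longrightarrow> 3 \<le> N k"
    and eps: "(\<Sum>k\<in>{1..K}. w k) \<le> 1/4" and t: "0 < t" "t < 1"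
  shows "t / ((\<Sum>k\<le>K. w k * N k) - ((\<Sum>k\<le>K. w k * N k) - 1) * t) \<le> (\<Sum>k\<le>K. w k * t ^ N k)"
proof -
  define s where "s = 1 - t"
  have s: "0 < s" "s < 1" using t by (auto simp: s_def)
  define \<epsilon> where "\<epsilon> = (\<Sum>k\<in>{1..K}. w k)"
  define n where "n k = real (N k) - 1" for k
  define m where "m = (\<Sum>k\<in>{1..K}. w k * n k)"
  have n2: "2 \<le> n k" if "1 \<le> k" "k \<le> K" for k using N3[OF that] by (simp add: n_def)
  have m0: "0 \<le> m" unfolding m_def
  proof (intro sum_nonneg)
    fix k assume "k \<in> {1..K}"
    then have "0 \<le> w k" "2 \<le> n k" using wnn n2 by auto
    then show "0 \<le> w k * n k" by simp
  qed
  have e0: "0 \<le> \<epsilon>" unfolding \<epsilon>_def using wnn by (intro sum_nonneg) auto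
  have w0: "w 0 + \<epsilon> = 1" using wsum by (simp add: sum_split0 \<epsilon>_def)
  have mu: "(\<Sum>k\<le>K. w k * N k) = 1 + m"
  proof -
    have "(\<Sum>k\<le>K. w k * N k) = w 0 + (\<Sum>k\<in>{1..K}. w k * N k)" by (simp add: sum_split0 N0)
    also have "(\<Sum>k\<in>{1..K}. w k * N k) = (\<Sum>k\<in>{1..K}. w k * n k + w k)"
      by (intro sum.cong) (auto simp: n_def algebra_simps)
    also have "\<dots> = m + \<epsilon>" by (simp add: sum.distrib m_def \<epsilon>_def)
    finally show ?thesis using w0 by simp
  qed
  have den: "(\<Sum>k\<le>K. w k * N k) - ((\<Sum>k\<le>K. w k * N k) - 1) * t = 1 + m * s"
    unfolding mu s_def by (simp add: algebra_simps)
  have ms0: "0 \<le> m * s" using m0 s by simp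
  have B: "(\<Sum>k\<in>{1..K}. w k * (1 - t ^ (N k - 1))) \<le> m * s / (1 + m * s)"
  proof -
    have pk: "1 - t ^ (N k - 1) \<le> 4 * (n k * s) / (4 + n k * s)" if "1 \<le> k" "k \<le> K" for k
    proof -
      have "1 - (1 - s) ^ (N k - 1) \<le> 4 * real (N k - 1) * s / (4 + real (N k - 1) * s)"
        by (rule L1) (use s N3[OF that] in auto)
      moreover have "real (N k - 1) = n k" using N3[OF that] by (simp add: n_def of_nat_diff)
      ultimately show ?thesis by (simp add: s_def mult.assoc)
    qed
    have S1: "(\<Sum>k\<in>{1..K}. w k * (1 - t ^ (N k - 1))) \<le> (\<Sum>k\<in>{1..K}. w k * (4 * (n k * s) / (4 + n k * s)))"
      using pk wnn by (intro sum_mono mult_left_mono) auto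
    show ?thesis
    proof (cases "\<epsilon> = 0")
      case True
      have "w k = 0" if "k \<in> {1..K}" for k
        using True wnn that unfolding \<epsilon>_def by (subst (asm) sum_nonneg_eq_0_iff) auto
      then have "(\<Sum>k\<in>{1..K}. w k * (1 - t ^ (N k - 1))) = 0" by simp
      moreover have "0 \<le> m * s / (1 + m * s)" using ms0 by simp
      ultimately show ?thesis by simp
    next
      case False
      hence ep: "0 < \<epsilon>" using e0 by simp
      define x0 where "x0 = m * s / \<epsilon>"
      have x00: "0 \<le> x0" using ms0 ep by (simp add: x0_def)
      define Dc where "Dc = 16 / (4 + x0)^2"
      define c1 where "c1 = 4 * x0 / (4 + x0)"
      have "(\<Sum>k\<in>{1..K}. w k * (4 * (n k * s) / (4 + n k * s)))
            \<le> (\<Sum>k\<in>{1..K}. w k * (4 * x0 / (4 + x0) + 16 * (n k * s - x0) / (4 + x0)^2))"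
      proof (intro sum_mono mult_left_mono tangent)
        fix k assume k: "k \<in> {1..K}"
        then have "2 \<le> n k" using n2 by auto
        then show "0 \<le> n k * s" using s by simp
        show "0 \<le> w k" using k wnn by auto
      qed (rule x00)
      also have "\<dots> = (\<Sum>k\<in>{1..K}. c1 * w k + (Dc * s) * (w k * n k) - (Dc * x0) * w k)"
      proof (intro sum.cong refl)
        fix k
        have hh: "16 * (n k * s - x0) / (4 + x0)^2 = Dc * (n k * s - x0)" by (simp add: Dc_def)
        show "w k * (4 * x0 / (4 + x0) + 16 * (n k * s - x0) / (4 + x0)^2) =
          c1 * w k + (Dc * s) * (w k * n k) - (Dc * x0) * w k"
          unfolding hh c1_def[symmetric] by (simp add: algebra_simps)
      qed
      also have "\<dots> = c1 * \<epsilon> + (Dc * s) * m - (Dc * x0) * \<epsilon>"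
        by (simp add: sum.distrib sum_subtractf sum_distrib_left[symmetric] \<epsilon>_def m_def)
      also have "\<dots> = \<epsilon> * c1 + Dc * (m * s - \<epsilon> * x0)"
        by (simp add: algebra_simps)
      also have "m * s - \<epsilon> * x0 = 0"
        using ep by (simp add: x0_def)
      also have "\<epsilon> * c1 + Dc * 0 = 4 * \<epsilon> * (m * s) / (4 * \<epsilon> + m * s)"
        using ep x00 by (simp add: c1_def x0_def field_simps)
      also have "\<dots> \<le> m * s / (1 + m * s)"
      proof -
        have "4 * \<epsilon> \<le> 1" using eps by (simp add: \<epsilon>_def)
        have d1: "0 < 4 * \<epsilon> + m * s" using ep ms0 by simp
        have d2: "0 < 1 + m * s" using ms0 by simp
        have "4 * \<epsilon> * (m * s) * (1 + m * s) \<le> m * s * (4 * \<epsilon> + m * s)"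
        proof -
          have "4 * \<epsilon> * (m * s) * (m * s) \<le> 1 * (m * s) * (m * s)"
            using \<open>4 * \<epsilon> \<le> 1\<close> ms0 by (intro mult_right_mono) auto
          then show ?thesis by (simp add: algebra_simps)
        qed
        then show ?thesis using d1 d2 by (simp add: divide_simps mult.commute mult.left_commute)
      qed
      finally show ?thesis using S1 by linarith
    qed
  qed
  have R: "(\<Sum>k\<le>K. w k * t ^ N k) = t * (1 - (\<Sum>k\<in>{1..K}. w k * (1 - t ^ (N k - 1))))"
  proof -
    have "(\<Sum>k\<le>K. w k * t ^ N k) = w 0 * t + (\<Sum>k\<in>{1..K}. w k * t ^ N k)" by (simp add: sum_split0 N0)
    also have "(\<Sum>k\<in>{1..K}. w k * t ^ N k) = (\<Sum>k\<in>{1..K}. t * (w k - w k * (1 - t ^ (N k - 1))))"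
    proof (intro sum.cong refl)
      fix k assume "k \<in> {1..K}"
      then have "N k = Suc (N k - 1)" using N3[of k] by auto
      then have "t ^ N k = t * t ^ (N k - 1)" by (metis power_Suc)
      then show "w k * t ^ N k = t * (w k - w k * (1 - t ^ (N k - 1)))" by (simp add: algebra_simps)
    qed
    also have "\<dots> = t * (\<epsilon> - (\<Sum>k\<in>{1..K}. w k * (1 - t ^ (N k - 1))))"
      by (simp add: sum_distrib_left[symmetric] sum_subtractf \<epsilon>_def)
    finally have X: "(\<Sum>k\<le>K. w k * t ^ N k) = w 0 * t + t * (\<epsilon> - (\<Sum>k\<in>{1..K}. w k * (1 - t ^ (N k - 1))))" .
    have "w 0 * t + t * (\<epsilon> - (\<Sum>k\<in>{1..K}. w k * (1 - t ^ (N k - 1)))) = t * ((w 0 + \<epsilon>) - (\<Sum>k\<in>{1..K}. w k * (1 - t ^ (N k - 1))))"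
      by (simp only: algebra_simps)
    then show ?thesis using X by (simp only: w0)
  qed
  have "t / (1 + m * s) = t * (1 - m * s / (1 + m * s))"
    using ms0 by (simp add: field_simps)
  also have "\<dots> \<le> t * (1 - (\<Sum>k\<in>{1..K}. w k * (1 - t ^ (N k - 1))))"
    using B t by (intro mult_left_mono) auto
  finally show ?thesis unfolding den R .
qed




lemma geom_pgf_closed:
  assumes mu: "1 \<le> mu" and t: "0 < t" "t < 1"
  shows "geom_pgf mu t = t / (mu - (mu - 1) * t)"
proof -
  have x: "norm ((1 - 1/mu) * t) < 1"
  proof -
    have "0 \<le> 1 - 1/mu" "1 - 1/mu \<le> 1" using mu by auto
    then have a: "0 \<le> (1 - 1/mu) * t" using t by simp
    have "(1 - 1/mu) * t \<le> 1 * t" using \<open>1 - 1/mu \<le> 1\<close> t by (intro mult_right_mono) auto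
    then have "(1 - 1/mu) * t < 1" using t by linarith
    then show ?thesis using a by simp
  qed
  have "(\<lambda>h. (t / mu) * ((1 - 1/mu) * t) ^ h) sums ((t / mu) * (1 / (1 - (1 - 1/mu) * t)))"
    by (rule sums_mult) (rule geometric_sums[OF x])
  moreover have "(\<lambda>h. (t / mu) * ((1 - 1/mu) * t) ^ h) = (\<lambda>h. (1/mu) * (1 - 1/mu)^h * t^(Suc h))"
    by (rule ext) (simp add: power_mult_distrib)
  ultimately have "(\<lambda>h. (1/mu) * (1 - 1/mu)^h * t^(Suc h)) sums ((t / mu) * (1 / (1 - (1 - 1/mu) * t)))"
    by simp
  then have "geom_pgf mu t = (t / mu) * (1 / (1 - (1 - 1/mu) * t))"
    unfolding geom_pgf_def by (rule sums_unique[symmetric])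
  also have "\<dots> = t / (mu - (mu - 1) * t)"
  proof -
    have e: "1 - (1 - 1/mu) * t = (mu - (mu - 1) * t) / mu" using mu by (simp add: field_simps)
    have p: "0 < mu - (mu - 1) * t"
    proof -
      have "(mu - 1) * t \<le> mu - 1" using mu t mult_left_mono[of t 1 "mu - 1"] by simp
      then show ?thesis using t mu by linarith
    qed
    show ?thesis unfolding e using mu p by simp
  qed
  finally show ?thesis .
qed

lemma harm_shift: "(\<Sum>i\<in>{1..n}. 1 / (real i + 1)) = harm (Suc n) - (1::real)"
proof (induction n)
  case 0 then show ?case by (simp add: harm_def)
next
  case (Suc n)
  then show ?case by (simp add: harm_Suc inverse_eq_divide add.commute)
qed

lemma bb_harm: "(\<Sum>k\<in>{1..K}. 1 / (real K - real k + 2)) = harm (Suc K) - (1::real)"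
proof -
  have "(\<Sum>k\<in>{1..K}. 1 / (real K - real k + 2)) = (\<Sum>i\<in>{1..K}. 1 / (real K - real (K + 1 - i) + 2))"
    by (rule sum.atLeastAtMost_rev)
  also have "\<dots> = (\<Sum>i\<in>{1..K}. 1 / (real i + 1))"
    by (intro sum.cong) (auto simp: of_nat_diff)
  finally show ?thesis using harm_shift by simp
qed

definition Mn :: "nat \<Rightarrow> nat" where "Mn K = 2 * K * (K + 1)"

definition wZ :: "nat \<Rightarrow> nat \<Rightarrow> real" where
  "wZ K z = (if z < K then (1 / real (Mn K))^z * (1 - 1 / real (Mn K)) else (1 / real (Mn K))^K)"

definition bb :: "nat \<Rightarrow> nat \<Rightarrow> real" where "bb K k = real K - real k + 1"

definition eps :: "nat \<Rightarrow> nat \<Rightarrow> real" where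
  "eps K k = (real K + 1) / (real (Mn K) ^ k * (bb K k * (bb K k + 1)))"

definition wH :: "nat \<Rightarrow> nat \<Rightarrow> real" where
  "wH K k = (if k = 0 then 1 - (\<Sum>k'\<in>{1..K}. eps K k') else eps K k)"

definition DD :: "nat \<Rightarrow> real measure" where
  "DD K = distr (measure_pmf (fpmf K (wZ K))) borel (\<lambda>z. real (Mn K) ^ z)"

definition HH :: "nat \<Rightarrow> nat pmf" where
  "HH K = map_pmf (\<lambda>k. Mn K ^ k) (fpmf K (wH K))"

context
  fixes K :: nat
  assumes K1: "1 \<le> K"
begin

lemma Mn_ge: "4 \<le> Mn K"
proof -
  have "2 * 1 * (1 + 1) \<le> 2 * K * (K + 1)" using K1 by (intro mult_mono) auto
  then show ?thesis unfolding Mn_def by simp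
qed

lemma Mr_ge: "4 \<le> real (Mn K)"
  using Mn_ge by (metis of_nat_le_iff of_nat_numeral)

lemma wZ_nn: "0 \<le> wZ K z"
  using Mr_ge by (simp add: wZ_def)

lemma wZ_partial: "j \<le> K \<Longrightarrow> (\<Sum>z<j. wZ K z) = 1 - (1 / real (Mn K))^j"
proof (induction j)
  case 0 then show ?case by simp
next
  case (Suc j)
  then have "(\<Sum>z<Suc j. wZ K z) = 1 - (1 / real (Mn K))^j + (1 / real (Mn K))^j * (1 - 1 / real (Mn K))"
    by (simp add: wZ_def)
  also have "\<dots> = 1 - (1 / real (Mn K))^Suc j" by (simp add: algebra_simps)
  finally show ?case .
qed

lemma wZ_sum: "(\<Sum>z\<le>K. wZ K z) = 1"
proof -
  have "(\<Sum>z\<le>K. wZ K z) = (\<Sum>z<K. wZ K z) + wZ K K"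
    by (simp add: lessThan_Suc_atMost[symmetric])
  also have "\<dots> = 1" using wZ_partial[of K] by (simp add: wZ_def)
  finally show ?thesis .
qed

lemma wZ_Mr: "z \<le> K \<Longrightarrow> wZ K z * real (Mn K) ^ z \<le> 1"
proof -
  assume zK: "z \<le> K"
  have M0: "0 < real (Mn K)" using Mr_ge by simp
  show ?thesis
  proof (cases "z < K")
    case True
    then have "wZ K z * real (Mn K) ^ z = 1 - 1 / real (Mn K)"
      using M0 by (simp add: wZ_def power_one_over field_simps)
    then show ?thesis using M0 by simp
  next
    case False
    with zK have "z = K" by simp
    then show ?thesis using M0 by (simp add: wZ_def power_one_over)
  qed
qed

lemma bb_ge: "k \<le> K \<Longrightarrow> 1 \<le> bb K k" by (simp add: bb_def)

lemma bb_le: "bb K k \<le> real K + 1" by (simp add: bb_def)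

lemma eps_nn: "k \<le> K \<Longrightarrow> 0 \<le> eps K k"
  using bb_ge[of k] Mr_ge by (simp add: eps_def)

lemma eps_le: assumes "1 \<le> k" "k \<le> K" shows "eps K k \<le> (real K + 1) / (2 * real (Mn K))"
proof -
  have b: "1 \<le> bb K k" using bb_ge assms by simp
  have "2 \<le> bb K k * (bb K k + 1)"
    using b mult_mono[of 1 "bb K k" 2 "bb K k + 1"] by simp
  moreover have "real (Mn K) \<le> real (Mn K) ^ k"
    using power_increasing[of 1 k "real (Mn K)"] assms Mr_ge by simp
  ultimately have "2 * real (Mn K) \<le> real (Mn K) ^ k * (bb K k * (bb K k + 1))"
    using Mr_ge mult_mono[of "real (Mn K)" "real (Mn K) ^ k" 2 "bb K k * (bb K k + 1)"] by (simp add: mult.commute)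
  moreover have "0 < 2 * real (Mn K)" using Mr_ge by simp
  ultimately show ?thesis unfolding eps_def
    by (intro divide_left_mono) auto
qed

lemma eps_sum: "(\<Sum>k\<in>{1..K}. eps K k) \<le> 1/4"
proof -
  have "(\<Sum>k\<in>{1..K}. eps K k) \<le> (\<Sum>k\<in>{1..K}. (real K + 1) / (2 * real (Mn K)))"
    using eps_le by (intro sum_mono) auto
  also have "\<dots> = real K * (real K + 1) / (2 * real (Mn K))" by simp
  also have "\<dots> = 1/4"
  proof -
    define y where "y = real K * (real K + 1)"
    have y0: "0 < y" using K1 by (simp add: y_def)
    have "real (Mn K) = 2 * y" by (simp add: Mn_def y_def algebra_simps)
    then have "real K * (real K + 1) / (2 * real (Mn K)) = y / (4 * y)" by (simp add: y_def)
    also have "\<dots> = 1/4" using y0 by simp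
    finally show ?thesis .
  qed
  finally show ?thesis .
qed

lemma wH_nn: "k \<le> K \<Longrightarrow> 0 \<le> wH K k"
  using eps_sum eps_nn by (auto simp: wH_def)

lemma wH0_le: "wH K 0 \<le> 1"
proof -
  have "0 \<le> (\<Sum>k\<in>{1..K}. eps K k)" using eps_nn by (intro sum_nonneg) auto
  then show ?thesis by (simp add: wH_def)
qed

lemma wH_sum: "(\<Sum>k\<le>K. wH K k) = 1"
proof -
  have "(\<Sum>k\<le>K. wH K k) = wH K 0 + (\<Sum>k\<in>{1..K}. wH K k)" by (rule sum_split0)
  also have "(\<Sum>k\<in>{1..K}. wH K k) = (\<Sum>k\<in>{1..K}. eps K k)" by (intro sum.cong) (auto simp: wH_def)
  finally show ?thesis by (simp add: wH_def)
qed

lemma wH_tail: "(\<Sum>k\<in>{1..K}. wH K k) \<le> 1/4"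
proof -
  have "(\<Sum>k\<in>{1..K}. wH K k) = (\<Sum>k\<in>{1..K}. eps K k)" by (intro sum.cong) (auto simp: wH_def)
  then show ?thesis using eps_sum by simp
qed

lemma wZ_nn': "z \<le> K \<Longrightarrow> 0 \<le> wZ K z" using wZ_nn by simp

lemmas Zpmf = nn_integral_fpmf[OF wZ_nn' wZ_sum] integral_fpmf[OF wZ_nn' wZ_sum]
  set_fpmf[OF wZ_nn' wZ_sum] finite_set_fpmf[OF wZ_nn' wZ_sum]
lemmas Hpmf = nn_integral_fpmf[OF wH_nn wH_sum] integral_fpmf[OF wH_nn wH_sum]
  set_fpmf[OF wH_nn wH_sum] finite_set_fpmf[OF wH_nn wH_sum]

lemma DD_prob: "prob_space (DD K)"
  unfolding DD_def by (rule measure_pmf.prob_space_distr) simp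

lemma DD_sets: "sets (DD K) = sets borel"
  by (simp add: DD_def)

lemma nnD:
  assumes f: "f \<in> borel_measurable borel"
  shows "(\<integral>\<^sup>+ x. f x \<partial>DD K) = (\<Sum>z\<le>K. ennreal (wZ K z) * f (real (Mn K) ^ z))"
  unfolding DD_def by (subst nn_integral_distr) (simp_all add: f Zpmf)

lemma emeasure_DD:
  assumes A: "A \<in> sets borel"
  shows "emeasure (DD K) A = ennreal (\<Sum>z\<le>K. wZ K z * indicator A (real (Mn K) ^ z))"
proof -
  have "emeasure (DD K) A = (\<integral>\<^sup>+ x. indicator A x \<partial>DD K)"
    using A by (simp add: DD_sets)
  also have "\<dots> = (\<Sum>z\<le>K. ennreal (wZ K z) * indicator A (real (Mn K) ^ z))"
    using A by (subst nnD) auto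
  also have "\<dots> = ennreal (\<Sum>z\<le>K. wZ K z * indicator A (real (Mn K) ^ z))"
    using wZ_nn by (subst sum_ennreal[symmetric]) (auto simp: ennreal_mult' ennreal_indicator)
  finally show ?thesis .
qed

lemma measure_DD:
  assumes A: "A \<in> sets borel"
  shows "measure (DD K) A = (\<Sum>z\<le>K. wZ K z * indicator A (real (Mn K) ^ z))"
  using emeasure_DD[OF A] wZ_nn by (simp add: measure_def sum_nonneg)

lemma AE_DD: "AE x in DD K. 1 \<le> x \<and> x \<le> real (Mn K) ^ K"
proof -
  have "AE z in measure_pmf (fpmf K (wZ K)). 1 \<le> real (Mn K) ^ z \<and> real (Mn K) ^ z \<le> real (Mn K) ^ K"
  proof (rule AE_pmfI)
    fix z assume "z \<in> set_pmf (fpmf K (wZ K))"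
    then have "z \<le> K" using Zpmf(3) by auto
    then show "1 \<le> real (Mn K) ^ z \<and> real (Mn K) ^ z \<le> real (Mn K) ^ K"
      using Mr_ge by (auto intro: power_increasing one_le_power)
  qed
  then show ?thesis unfolding DD_def
    by (subst AE_distr_iff) auto
qed

lemma value_dist_DD: "value_dist (DD K)"
proof -
  have "integrable (DD K) (\<lambda>x. x)"
    unfolding DD_def
    by (subst integrable_distr_eq) (auto intro: integrable_measure_pmf_finite Zpmf(4))
  moreover have "AE x in DD K. 0 \<le> x" using AE_DD by eventually_elim auto
  ultimately show ?thesis using DD_prob DD_sets by (simp add: value_dist_def)
qed

lemma set_HH: "set_pmf (HH K) \<subseteq> (\<lambda>k. Mn K ^ k) ` {..K}"
  using Hpmf(3) by (auto simp: HH_def)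

lemma HH_horizon: "horizon (HH K)"
proof -
  have "set_pmf (HH K) \<subseteq> {1..}"
    using set_HH Mn_ge by (auto intro!: one_le_power)
  moreover have "finite (set_pmf (HH K))"
    using set_HH by (rule finite_subset) simp
  ultimately show ?thesis unfolding horizon_def
    by (auto intro: integrable_measure_pmf_finite)
qed

lemma nn_HH: "(\<integral>\<^sup>+ h. f h \<partial>measure_pmf (HH K)) = (\<Sum>k\<le>K. ennreal (wH K k) * f (Mn K ^ k))"
  unfolding HH_def by (simp add: Hpmf)

lemma E_HH: "measure_pmf.expectation (HH K) f = (\<Sum>k\<le>K. wH K k * f (Mn K ^ k))"
  unfolding HH_def by (simp add: Hpmf)

lemma Gbar_HH: "Gbar (HH K)"
  unfolding Gbar_def
proof
  fix t :: real assume t: "t \<in> {0<..<1}"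
  define mu where "mu = (\<Sum>k\<le>K. wH K k * real (Mn K ^ k))"
  have mu1: "1 \<le> mu"
  proof -
    have "(\<Sum>k\<le>K. wH K k * 1) \<le> mu" unfolding mu_def
      using wH_nn Mn_ge by (intro sum_mono mult_left_mono) (auto intro!: one_le_power)
    then show ?thesis using wH_sum by simp
  qed
  have "geom_pgf mu t = t / (mu - (mu - 1) * t)"
    by (rule geom_pgf_closed) (use mu1 t in auto)
  also have "\<dots> \<le> (\<Sum>k\<le>K. wH K k * t ^ (Mn K ^ k))"
    unfolding mu_def
  proof (rule gbar_core[where N="\<lambda>k. Mn K ^ k"])
    show "\<And>k. k \<le> K \<Longrightarrow> 0 \<le> wH K k" by (rule wH_nn)
    show "(\<Sum>k\<le>K. wH K k) = 1" by (rule wH_sum)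
    show "Mn K ^ 0 = 1" by simp
    show "3 \<le> Mn K ^ k" if "1 \<le> k" "k \<le> K" for k
    proof -
      have "Mn K ^ 1 \<le> Mn K ^ k" using that Mn_ge by (intro power_increasing) auto
      then show ?thesis using Mn_ge by simp
    qed
    show "(\<Sum>k\<in>{1..K}. wH K k) \<le> 1/4" by (rule wH_tail)
  qed (use t in auto)
  finally show "geom_pgf (measure_pmf.expectation (HH K) real) t \<le> measure_pmf.expectation (HH K) (\<lambda>h. t ^ h)"
    unfolding E_HH mu_def by simp
qed

definition ER :: "real \<Rightarrow> real" where
  "ER p = (\<Sum>z\<le>K. wZ K z * (if p \<le> real (Mn K) ^ z then real (Mn K) ^ z else 0))"

definition AR :: "real \<Rightarrow> real" where
  "AR p = (\<Sum>z\<le>K. wZ K z * indicator {x. x < p} (real (Mn K) ^ z))"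

lemma ER_nn: "0 \<le> ER p"
  unfolding ER_def using wZ_nn by (intro sum_nonneg) auto

lemma AR_nn: "0 \<le> AR p"
  unfolding AR_def using wZ_nn by (intro sum_nonneg) auto

lemma reward_nn:
  "(\<integral>\<^sup>+ x. ennreal (thr_reward p x) \<partial>joint (DD K) (HH K)) =
     ennreal (\<Sum>k\<le>K. wH K k * (ER p * (\<Sum>i<Mn K ^ k. AR p ^ i)))"
proof -
  have g: "(\<lambda>x. ennreal (thr_reward p x)) \<in> borel_measurable (SS (DD K) \<Otimes>\<^sub>M measure_pmf (HH K))"
    using measurable_comp[OF thr_reward_measurable[OF DD_sets] measurable_ennreal] by (simp add: comp_def)
  have Ee: "(\<integral>\<^sup>+ x. ennreal (if p \<le> x then x else 0) \<partial>DD K) = ennreal (ER p)"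
  proof -
    have "(\<lambda>x. ennreal (if p \<le> x then x else 0)) \<in> borel_measurable borel" by measurable
    then have "(\<integral>\<^sup>+ x. ennreal (if p \<le> x then x else 0) \<partial>DD K)
        = (\<Sum>z\<le>K. ennreal (wZ K z) * ennreal (if p \<le> real (Mn K) ^ z then real (Mn K) ^ z else 0))"
      by (rule nnD)
    also have "\<dots> = ennreal (ER p)" unfolding ER_def
      using wZ_nn by (subst sum_ennreal[symmetric]) (auto simp: ennreal_mult')
    finally show ?thesis .
  qed
  have Ae: "emeasure (DD K) {x. x < p} = ennreal (AR p)"
    unfolding AR_def by (rule emeasure_DD) simp
  have slice: "(\<integral>\<^sup>+ xs. ennreal (thr_reward p (xs, h)) \<partial>SS (DD K)) = ennreal (ER p * (\<Sum>i<h. AR p ^ i))" for h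
  proof -
    have "(\<Sum>i<h. ennreal (AR p) ^ i) = ennreal (\<Sum>i<h. AR p ^ i)"
      using AR_nn by (subst sum_ennreal[symmetric]) (auto simp: ennreal_power)
    then show ?thesis
      unfolding nn_reward_slice[OF DD_prob DD_sets] Ee Ae
      using ER_nn AR_nn by (simp add: ennreal_mult sum_nonneg)
  qed
  have "(\<integral>\<^sup>+ x. ennreal (thr_reward p x) \<partial>joint (DD K) (HH K))
      = (\<integral>\<^sup>+ h. (\<integral>\<^sup>+ xs. ennreal (thr_reward p (xs, h)) \<partial>SS (DD K)) \<partial>measure_pmf (HH K))"
    by (rule nn_joint[OF DD_prob DD_sets g])
  also have "\<dots> = (\<Sum>k\<le>K. ennreal (wH K k) * ennreal (ER p * (\<Sum>i<Mn K ^ k. AR p ^ i)))"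
    unfolding nn_HH slice ..
  also have "\<dots> = ennreal (\<Sum>k\<le>K. wH K k * (ER p * (\<Sum>i<Mn K ^ k. AR p ^ i)))"
    using wH_nn ER_nn AR_nn
    by (subst sum_ennreal[symmetric]) (auto simp: ennreal_mult' sum_nonneg intro!: sum.cong)
  finally show ?thesis .
qed

lemma telescope: "j \<le> K \<Longrightarrow> (\<Sum>k\<in>{1..j}. 1 / (bb K k * (bb K k + 1))) = 1 / bb K j - 1 / (real K + 1)"
proof (induction j)
  case 0 then show ?case by (simp add: bb_def)
next
  case (Suc j)
  have b: "bb K j = bb K (Suc j) + 1" by (simp add: bb_def)
  have b1: "1 \<le> bb K (Suc j)" using Suc.prems by (simp add: bb_def)
  have "(\<Sum>k\<in>{1..Suc j}. 1 / (bb K k * (bb K k + 1))) = (\<Sum>k\<in>{1..j}. 1 / (bb K k * (bb K k + 1))) + 1 / (bb K (Suc j) * (bb K (Suc j) + 1))"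
    by simp
  also have "\<dots> = 1 / (bb K (Suc j) + 1) - 1 / (real K + 1) + 1 / (bb K (Suc j) * (bb K (Suc j) + 1))"
    using Suc by (simp add: b)
  also have "\<dots> = 1 / bb K (Suc j) - 1 / (real K + 1)"
  proof -
    have "1 / (b + 1) + 1 / (b * (b + 1)) = 1 / b" if "0 < b" for b :: real
    proof -
      have "b \<noteq> 0" "b + 1 \<noteq> 0" using that by auto
      then have "1 / (b + 1) + 1 / (b * (b + 1)) = (b + 1) / (b * (b + 1))"
        by (simp add: add_divide_distrib[symmetric] divide_simps)
      also have "\<dots> = 1 / b" using \<open>b + 1 \<noteq> 0\<close> by simp
      finally show ?thesis .
    qed
    then have "1 / (bb K (Suc j) + 1) + 1 / (bb K (Suc j) * (bb K (Suc j) + 1)) = 1 / bb K (Suc j)"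
      using b1 by simp
    then show ?thesis by linarith
  qed
  finally show ?case .
qed

lemma eps_Mr: "k \<le> K \<Longrightarrow> eps K k * real (Mn K) ^ k = (real K + 1) / (bb K k * (bb K k + 1))"
  using Mr_ge by (simp add: eps_def)

lemma eps_Mr_j: assumes "j < k" "k \<le> K" shows "eps K k * real (Mn K) ^ j \<le> (real K + 1) / real (Mn K)"
proof -
  have M1: "1 \<le> real (Mn K)" using Mr_ge by simp
  have b: "1 \<le> bb K k" using bb_ge assms by simp
  have bp: "1 \<le> bb K k * (bb K k + 1)" using b mult_mono[of 1 "bb K k" 1 "bb K k + 1"] by simp
  have "real (Mn K) ^ Suc j \<le> real (Mn K) ^ k" using assms M1 by (intro power_increasing) auto
  also have "\<dots> \<le> real (Mn K) ^ k * (bb K k * (bb K k + 1))" using bp M1 mult_left_mono[of 1 _ "real (Mn K) ^ k"] by simp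
  finally have c: "real (Mn K) * real (Mn K) ^ j \<le> real (Mn K) ^ k * (bb K k * (bb K k + 1))" by simp
  have pos: "0 < real (Mn K) ^ k * (bb K k * (bb K k + 1))" using M1 b by (simp add: add_pos_nonneg)
  have "eps K k * real (Mn K) ^ j = (real K + 1) * real (Mn K) ^ j / (real (Mn K) ^ k * (bb K k * (bb K k + 1)))"
    by (simp add: eps_def)
  also have "\<dots> \<le> (real K + 1) / real (Mn K)"
    using c pos M1 by (simp add: divide_simps) (simp add: algebra_simps mult_left_mono)
  finally show ?thesis .
qed

lemma geo_le_n: "0 \<le> (a::real) \<Longrightarrow> a \<le> 1 \<Longrightarrow> (\<Sum>i<n. a ^ i) \<le> real n"
proof -
  assume "0 \<le> a" "a \<le> 1"
  then have "(\<Sum>i<n. a ^ i) \<le> (\<Sum>i<n. (1::real))" by (intro sum_mono power_le_one) auto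
  then show ?thesis by simp
qed

lemma geo_le_inv: "0 \<le> (a::real) \<Longrightarrow> a < 1 \<Longrightarrow> (\<Sum>i<n. a ^ i) \<le> 1 / (1 - a)"
proof -
  assume a: "0 \<le> a" "a < 1"
  have "(\<Sum>i<n. a ^ i) = (a ^ n - 1) / (a - 1)" by (rule geometric_sum) (use a in simp)
  also have "\<dots> = (- (1 - a ^ n)) / (- (1 - a))" by simp
  also have "\<dots> = (1 - a ^ n) / (1 - a)" by (rule minus_divide_divide)
  also have "\<dots> \<le> 1 / (1 - a)" using a by (intro divide_right_mono) auto
  finally show ?thesis .
qed

lemma reward_bound: "(\<Sum>k\<le>K. wH K k * (ER p * (\<Sum>i<Mn K ^ k. AR p ^ i))) \<le> 3 * (real K + 1)"
proof (cases "real (Mn K) ^ K < p")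
  case True
  have "ER p = 0" unfolding ER_def
  proof (intro sum.neutral ballI)
    fix z assume "z \<in> {..K}"
    then have "real (Mn K) ^ z \<le> real (Mn K) ^ K" using Mr_ge by (intro power_increasing) auto
    then show "wZ K z * (if p \<le> real (Mn K) ^ z then real (Mn K) ^ z else 0) = 0" using True by auto
  qed
  then show ?thesis by simp
next
  case False
  define Mr where "Mr = real (Mn K)"
  have M1: "1 \<le> Mr" "0 < Mr" using Mr_ge by (auto simp: Mr_def)
  define j where "j = (LEAST z. p \<le> Mr ^ z)"
  have pK: "p \<le> Mr ^ K" using False by (simp add: Mr_def)
  have jK: "j \<le> K" unfolding j_def using pK by (rule Least_le)
  have pj: "p \<le> Mr ^ j" unfolding j_def using pK by (rule LeastI)
  have hj: "(p \<le> Mr ^ z) \<longleftrightarrow> j \<le> z" for z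
  proof
    assume "p \<le> Mr ^ z" then show "j \<le> z" unfolding j_def by (rule Least_le)
  next
    assume "j \<le> z"
    then have "Mr ^ j \<le> Mr ^ z" using M1 by (intro power_increasing) auto
    then show "p \<le> Mr ^ z" using pj by simp
  qed
  define b where "b = bb K j"
  have b1: "1 \<le> b" "b \<le> real K + 1" using jK by (auto simp: b_def bb_def)
  have ER_le: "ER p \<le> b"
  proof -
    have "ER p = (\<Sum>z\<le>K. (if j \<le> z then wZ K z * Mr ^ z else 0))"
      unfolding ER_def Mr_def[symmetric] by (intro sum.cong) (auto simp: hj)
    also have "\<dots> \<le> (\<Sum>z\<le>K. (if j \<le> z then 1 else 0))"
      by (intro sum_mono) (auto simp: Mr_def wZ_Mr)
    also have "\<dots> = real (card {z\<in>{..K}. j \<le> z})"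
      by (simp add: sum.inter_filter[symmetric])
    also have "{z\<in>{..K}. j \<le> z} = {j..K}" by auto
    also have "real (card {j..K}) = b" using jK by (simp add: b_def bb_def of_nat_diff)
    finally show ?thesis .
  qed
  have AR_eq: "AR p = 1 - (1 / Mr) ^ j"
  proof -
    have "AR p = (\<Sum>z\<le>K. (if z < j then wZ K z else 0))"
      unfolding AR_def Mr_def[symmetric]
    proof (intro sum.cong refl)
      fix z
      have "(Mr ^ z < p) \<longleftrightarrow> z < j" using hj[of z] by auto
      then show "wZ K z * indicator {x. x < p} (Mr ^ z) = (if z < j then wZ K z else 0)"
        by (simp add: indicator_def)
    qed
    also have "\<dots> = (\<Sum>z\<in>{z\<in>{..K}. z < j}. wZ K z)"
      by (rule sum.inter_filter[symmetric]) simp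
    also have "{z\<in>{..K}. z < j} = {..<j}" using jK by auto
    also have "(\<Sum>z<j. wZ K z) = 1 - (1 / Mr) ^ j" using wZ_partial[OF jK] by (simp add: Mr_def)
    finally show ?thesis .
  qed
  have A0: "0 \<le> AR p" by (rule AR_nn)
  have A1: "AR p < 1" using AR_eq M1 by simp
  have invA: "1 / (1 - AR p) = Mr ^ j" using AR_eq M1 by (simp add: power_one_over)
  define G where "G k = (\<Sum>i<Mn K ^ k. AR p ^ i)" for k
  have G_n: "G k \<le> Mr ^ k" for k
    using geo_le_n[OF A0 less_imp_le[OF A1], of "Mn K ^ k"] by (simp add: G_def Mr_def)
  have G_j: "G k \<le> Mr ^ j" for k
    using geo_le_inv[OF A0 A1, of "Mn K ^ k"] invA by (simp add: G_def)
  have G0: "G 0 = 1" by (simp add: G_def)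
  have Gnn: "0 \<le> G k" for k unfolding G_def using A0 by (intro sum_nonneg) auto
  have tail: "(\<Sum>k\<in>{1..K}. eps K k * G k) \<le> (real K + 1) / b + 1/2"
  proof -
    have "(\<Sum>k\<in>{1..K}. eps K k * G k) \<le>
          (\<Sum>k\<in>{1..K}. (if k \<le> j then (real K + 1) * (1 / (bb K k * (bb K k + 1))) else 0) + (real K + 1) / Mr)"
    proof (intro sum_mono)
      fix k assume k: "k \<in> {1..K}"
      have e0: "0 \<le> eps K k" using eps_nn k by simp
      have "0 \<le> (real K + 1) / Mr" using M1 by simp
      show "eps K k * G k \<le> (if k \<le> j then (real K + 1) * (1 / (bb K k * (bb K k + 1))) else 0) + (real K + 1) / Mr"
      proof (cases "k \<le> j")
        case True
        have "eps K k * G k \<le> eps K k * Mr ^ k" using G_n e0 by (intro mult_left_mono) auto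
        also have "\<dots> = (real K + 1) * (1 / (bb K k * (bb K k + 1)))" using eps_Mr[of k] k by (simp add: Mr_def)
        finally show ?thesis using True \<open>0 \<le> (real K + 1) / Mr\<close> by simp
      next
        case False
        have "eps K k * G k \<le> eps K k * Mr ^ j" using G_j e0 by (intro mult_left_mono) auto
        also have "\<dots> \<le> (real K + 1) / Mr" using eps_Mr_j[of j k] k False by (simp add: Mr_def)
        finally show ?thesis using False by simp
      qed
    qed
    also have "\<dots> = (real K + 1) * (\<Sum>k\<in>{1..j}. 1 / (bb K k * (bb K k + 1))) + real K * ((real K + 1) / Mr)"
    proof -
      have "(\<Sum>k\<in>{1..K}. (if k \<le> j then (real K + 1) * (1 / (bb K k * (bb K k + 1))) else 0))
            = (\<Sum>k\<in>{k\<in>{1..K}. k \<le> j}. (real K + 1) * (1 / (bb K k * (bb K k + 1))))"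
        by (rule sum.inter_filter[symmetric]) simp
      also have "{k\<in>{1..K}. k \<le> j} = {1..j}" using jK by auto
      finally show ?thesis by (simp add: sum.distrib sum_distrib_left)
    qed
    also have "\<dots> = (real K + 1) * (1 / b - 1 / (real K + 1)) + 1/2"
    proof -
      have "real K * ((real K + 1) / Mr) = 1/2"
      proof -
        define y where "y = real K * (real K + 1)"
        have y0: "0 < y" using K1 by (simp add: y_def)
        have "Mr = 2 * y" by (simp add: Mr_def Mn_def y_def algebra_simps)
        then have "real K * ((real K + 1) / Mr) = y / (2 * y)" by (simp add: y_def)
        also have "\<dots> = 1/2" using y0 by simp
        finally show ?thesis .
      qed
      then show ?thesis using telescope[OF jK] K1 by (simp add: b_def)
    qed
    also have "\<dots> \<le> (real K + 1) / b + 1/2"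
    proof -
      have "(real K + 1) * (1 / b - 1 / (real K + 1)) = (real K + 1) / b - 1"
        by (simp add: right_diff_distrib)
      then show ?thesis by linarith
    qed
    finally show ?thesis .
  qed
  have WG: "(\<Sum>k\<le>K. wH K k * G k) \<le> 3/2 + (real K + 1) / b"
  proof -
    have "(\<Sum>k\<le>K. wH K k * G k) = wH K 0 * G 0 + (\<Sum>k\<in>{1..K}. wH K k * G k)" by (rule sum_split0)
    also have "(\<Sum>k\<in>{1..K}. wH K k * G k) = (\<Sum>k\<in>{1..K}. eps K k * G k)"
      by (intro sum.cong) (auto simp: wH_def)
    finally show ?thesis using tail wH0_le G0 by simp
  qed
  have "(\<Sum>k\<le>K. wH K k * (ER p * (\<Sum>i<Mn K ^ k. AR p ^ i))) = ER p * (\<Sum>k\<le>K. wH K k * G k)"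
    by (simp add: G_def sum_distrib_left algebra_simps)
  also have "\<dots> \<le> b * (3/2 + (real K + 1) / b)"
  proof (rule mult_mono)
    show "ER p \<le> b" by (rule ER_le)
    show "(\<Sum>k\<le>K. wH K k * G k) \<le> 3/2 + (real K + 1) / b" by (rule WG)
    show "0 \<le> b" using b1 by simp
    show "0 \<le> (\<Sum>k\<le>K. wH K k * G k)" using wH_nn Gnn by (intro sum_nonneg mult_nonneg_nonneg) auto
  qed
  also have "\<dots> = 3/2 * b + (real K + 1)"
  proof -
    have "b * ((real K + 1) / b) = real K + 1" using b1 by simp
    then show ?thesis by (simp add: distrib_left)
  qed
  also have "\<dots> \<le> 3 * (real K + 1)" using b1 by simp
  finally show ?thesis .
qed

lemma measure_DD_less: "l \<le> K \<Longrightarrow> measure (DD K) {x. x < real (Mn K) ^ l} = 1 - (1 / real (Mn K)) ^ l"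
proof -
  assume lK: "l \<le> K"
  have M1: "1 < real (Mn K)" using Mr_ge by simp
  have "measure (DD K) {x. x < real (Mn K) ^ l} = (\<Sum>z\<le>K. wZ K z * indicator {x. x < real (Mn K) ^ l} (real (Mn K) ^ z))"
    by (rule measure_DD) simp
  also have "\<dots> = (\<Sum>z\<le>K. if z < l then wZ K z else 0)"
    using M1 by (intro sum.cong) (auto simp: indicator_def)
  also have "\<dots> = (\<Sum>z\<in>{z\<in>{..K}. z < l}. wZ K z)"
    by (rule sum.inter_filter[symmetric]) simp
  also have "{z\<in>{..K}. z < l} = {..<l}" using lK by auto
  finally show ?thesis using wZ_partial[OF lK] by simp
qed

lemma prophet_slice:
  assumes k: "1 \<le> k" "k \<le> K"
  shows "ennreal (bb K k * real (Mn K) ^ k / 4) \<le> (\<integral>\<^sup>+ xs. ennreal (Max (xs ` {1..Mn K ^ k})) \<partial>SS (DD K))"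
proof -
  define Mr where "Mr = real (Mn K)"
  have M1: "1 < Mr" "2 \<le> Mr" using Mr_ge by (auto simp: Mr_def)
  have N1: "1 \<le> Mn K ^ k" using Mn_ge by (simp add: one_le_power)
  have trm: "Mr ^ k / 2 \<le> Mr ^ l * (1 - measure (DD K) {x. x < Mr ^ l} ^ (Mn K ^ k))" if l: "l \<in> {k..K}" for l
  proof -
    define q where "q = (1 / Mr) ^ l"
    have q: "0 \<le> q" "q \<le> 1" using M1 by (auto simp: q_def power_le_one)
    have Nq: "real (Mn K ^ k) * q = Mr ^ k / Mr ^ l" by (simp add: q_def Mr_def power_one_over)
    have kl: "Mr ^ k \<le> Mr ^ l" using l M1 by (intro power_increasing) auto
    have Nq1: "real (Mn K ^ k) * q \<le> 1" unfolding Nq using kl M1 by simp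
    have "measure (DD K) {x. x < Mr ^ l} = 1 - q" using measure_DD_less[of l] l by (simp add: q_def Mr_def)
    then have "1 - measure (DD K) {x. x < Mr ^ l} ^ (Mn K ^ k) = 1 - (1 - q) ^ (Mn K ^ k)" by simp
    also have "\<dots> \<ge> real (Mn K ^ k) * q / 2" by (rule one_minus_pow_ge[OF q Nq1])
    finally have "Mr ^ l * (real (Mn K ^ k) * q / 2) \<le> Mr ^ l * (1 - measure (DD K) {x. x < Mr ^ l} ^ (Mn K ^ k))"
      using M1 by (intro mult_left_mono) auto
    moreover have "Mr ^ l * (real (Mn K ^ k) * q / 2) = Mr ^ k / 2"
    proof -
      have "Mr ^ l * (real (Mn K ^ k) * q / 2) = Mr ^ l * (Mr ^ k / Mr ^ l) / 2" by (simp only: Nq)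
      also have "\<dots> = Mr ^ k / 2" using M1 by simp
      finally show ?thesis .
    qed
    ultimately show ?thesis by simp
  qed
  have "bb K k * Mr ^ k / 4 = (1/2) * (\<Sum>l\<in>{k..K}. Mr ^ k / 2)"
    using k by (simp add: bb_def of_nat_diff)
  also have "\<dots> \<le> (1/2) * (\<Sum>l\<in>{k..K}. Mr ^ l * (1 - measure (DD K) {x. x < Mr ^ l} ^ (Mn K ^ k)))"
    using trm by (intro mult_left_mono sum_mono) auto
  finally have "ennreal (bb K k * Mr ^ k / 4) \<le> ennreal ((1/2) * (\<Sum>l\<in>{k..K}. Mr ^ l * (1 - measure (DD K) {x. x < Mr ^ l} ^ (Mn K ^ k))))"
    by (rule ennreal_leI)
  also have "\<dots> \<le> (\<integral>\<^sup>+ xs. ennreal (Max (xs ` {1..Mn K ^ k})) \<partial>SS (DD K))"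
    by (rule prophet_slice_lb[OF DD_prob DD_sets N1 M1(2)])
  finally show ?thesis by (simp add: Mr_def)
qed

lemma slice_AE:
  assumes h: "1 \<le> h"
  shows "AE xs in SS (DD K). 1 \<le> Max (xs ` {1..h}) \<and> Max (xs ` {1..h}) \<le> real (Mn K) ^ K"
  using AE_S[OF DD_prob DD_sets AE_DD]
proof eventually_elim
  case (elim xs)
  have "xs 1 \<le> Max (xs ` {1..h})" using h by (intro Max_ge) auto
  moreover have "Max (xs ` {1..h}) \<le> real (Mn K) ^ K" using h elim by (subst Max_le_iff) auto
  moreover have "1 \<le> xs 1" using elim by simp
  ultimately show ?case by linarith
qed

lemma slice_ub:
  assumes h: "1 \<le> h"
  shows "(\<integral>\<^sup>+ xs. ennreal (Max (xs ` {1..h})) \<partial>SS (DD K)) \<le> ennreal (real (Mn K) ^ K)"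
proof -
  have "(\<integral>\<^sup>+ xs. ennreal (Max (xs ` {1..h})) \<partial>SS (DD K)) \<le> (\<integral>\<^sup>+ xs. ennreal (real (Mn K) ^ K) \<partial>SS (DD K))"
    using slice_AE[OF h] by (intro nn_integral_mono_AE) (auto elim!: eventually_mono intro: ennreal_leI)
  also have "\<dots> = ennreal (real (Mn K) ^ K)" using PS1[OF DD_prob DD_sets] by simp
  finally show ?thesis .
qed

lemma slice_neg:
  assumes h: "1 \<le> h"
  shows "(\<integral>\<^sup>+ xs. ennreal (- Max (xs ` {1..h})) \<partial>SS (DD K)) = 0"
proof -
  have "(\<integral>\<^sup>+ xs. ennreal (- Max (xs ` {1..h})) \<partial>SS (DD K)) = (\<integral>\<^sup>+ xs. 0 \<partial>SS (DD K))"
    using slice_AE[OF h] by (intro nn_integral_cong_AE) (auto elim!: eventually_mono simp: ennreal_eq_0_iff)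
  then show ?thesis by simp
qed

lemma prophet_nn:
  assumes f: "f \<in> borel_measurable borel"
  shows "(\<integral>\<^sup>+ x. f (prophet x) \<partial>joint (DD K) (HH K)) =
    (\<Sum>k\<le>K. ennreal (wH K k) * (\<integral>\<^sup>+ xs. f (Max (xs ` {1..Mn K ^ k})) \<partial>SS (DD K)))"
proof -
  have g: "(\<lambda>x. f (prophet x)) \<in> borel_measurable (SS (DD K) \<Otimes>\<^sub>M measure_pmf (HH K))"
    using measurable_comp[OF prophet_measurable[OF DD_sets] f] by (simp add: comp_def)
  show ?thesis
    unfolding nn_joint[OF DD_prob DD_sets g] nn_HH by (simp add: prophet_def)
qed

lemma prophet_lb: "(real K + 1) / 4 * (harm (Suc K) - 1) \<le> integral\<^sup>L (joint (DD K) (HH K)) prophet"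
proof -
  let ?J = "joint (DD K) (HH K)"
  have pm: "prophet \<in> borel_measurable ?J"
    using prophet_measurable[OF DD_sets] by (simp add: joint_def)
  have N1: "1 \<le> Mn K ^ k" for k using Mn_ge by (simp add: one_le_power)
  have neg: "(\<integral>\<^sup>+ x. ennreal (- prophet x) \<partial>?J) = 0"
    using prophet_nn[of "\<lambda>x. ennreal (- x)"] slice_neg[OF N1] by simp
  have AEnn: "AE x in ?J. 0 \<le> prophet x"
  proof -
    have "(\<lambda>x. ennreal (- prophet x)) \<in> borel_measurable ?J" using pm by simp
    from neg[unfolded nn_integral_0_iff_AE[OF this]]
    show ?thesis by eventually_elim (simp add: ennreal_eq_0_iff)
  qed
  have ub: "(\<integral>\<^sup>+ x. ennreal (prophet x) \<partial>?J) \<le> ennreal (real (Mn K) ^ K)"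
  proof -
    have "(\<integral>\<^sup>+ x. ennreal (prophet x) \<partial>?J) = (\<Sum>k\<le>K. ennreal (wH K k) * (\<integral>\<^sup>+ xs. ennreal (Max (xs ` {1..Mn K ^ k})) \<partial>SS (DD K)))"
      by (rule prophet_nn) simp
    also have "\<dots> \<le> (\<Sum>k\<le>K. ennreal (wH K k) * ennreal (real (Mn K) ^ K))"
      using slice_ub[OF N1] by (intro sum_mono mult_left_mono) auto
    also have "\<dots> = ennreal (\<Sum>k\<le>K. wH K k * real (Mn K) ^ K)"
      using wH_nn by (subst sum_ennreal[symmetric]) (auto simp: ennreal_mult')
    also have "\<dots> = ennreal (real (Mn K) ^ K)" using wH_sum by (simp add: sum_distrib_right[symmetric])
    finally show ?thesis .
  qed
  have lb: "ennreal ((real K + 1) / 4 * (harm (Suc K) - 1)) \<le> (\<integral>\<^sup>+ x. ennreal (prophet x) \<partial>?J)"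
  proof -
    have e: "(real K + 1) / 4 * (harm (Suc K) - 1) = (\<Sum>k\<in>{1..K}. wH K k * (bb K k * real (Mn K) ^ k / 4))"
    proof -
      have "(\<Sum>k\<in>{1..K}. wH K k * (bb K k * real (Mn K) ^ k / 4)) = (\<Sum>k\<in>{1..K}. (real K + 1) / 4 * (1 / (real K - real k + 2)))"
      proof (intro sum.cong refl)
        fix k assume k: "k \<in> {1..K}"
        have b: "1 \<le> bb K k" using k bb_ge by simp
        have "wH K k * (bb K k * real (Mn K) ^ k / 4) = (eps K k * real (Mn K) ^ k) * bb K k / 4"
          using k by (simp add: wH_def)
        also have "\<dots> = (real K + 1) / (bb K k * (bb K k + 1)) * bb K k / 4" using eps_Mr[of k] k by simp
        also have "\<dots> = (real K + 1) / 4 * (1 / (bb K k + 1))"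
        proof -
          have gen: "x / (y * (y + 1)) * y / 4 = x / 4 * (1 / (y + 1))" if "1 \<le> y" for x y :: real
          proof -
            have y0: "y \<noteq> 0" using that by auto
            have "y / (y * (y + 1)) = 1 / (y + 1)" using y0 by simp
            then have "x / (y * (y + 1)) * y = x * (1 / (y + 1))" by (metis times_divide_eq_left times_divide_eq_right)
            then show ?thesis by simp
          qed
          show ?thesis using gen[OF b] .
        qed
        also have "bb K k + 1 = real K - real k + 2" by (simp add: bb_def)
        finally show "wH K k * (bb K k * real (Mn K) ^ k / 4) = (real K + 1) / 4 * (1 / (real K - real k + 2))" .
      qed
      also have "\<dots> = (real K + 1) / 4 * (harm (Suc K) - 1)"
        by (simp only: sum_distrib_left[symmetric] bb_harm)
      finally show ?thesis by simp
    qed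
    have nn: "0 \<le> wH K k" "0 \<le> bb K k * real (Mn K) ^ k / 4" if "k \<in> {1..K}" for k
    proof -
      show "0 \<le> wH K k" using wH_nn that by simp
      have "1 \<le> bb K k" using bb_ge that by simp
      then show "0 \<le> bb K k * real (Mn K) ^ k / 4" by simp
    qed
    have "ennreal ((real K + 1) / 4 * (harm (Suc K) - 1)) = (\<Sum>k\<in>{1..K}. ennreal (wH K k * (bb K k * real (Mn K) ^ k / 4)))"
      unfolding e by (rule sum_ennreal[symmetric]) (use nn in simp)
    also have "\<dots> = (\<Sum>k\<in>{1..K}. ennreal (wH K k) * ennreal (bb K k * real (Mn K) ^ k / 4))"
    proof (intro sum.cong refl)
      fix k assume k: "k \<in> {1..K}"
      show "ennreal (wH K k * (bb K k * real (Mn K) ^ k / 4)) = ennreal (wH K k) * ennreal (bb K k * real (Mn K) ^ k / 4)"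
        by (rule ennreal_mult) (use nn[OF k] in auto)
    qed
    also have "\<dots> \<le> (\<Sum>k\<in>{1..K}. ennreal (wH K k) * (\<integral>\<^sup>+ xs. ennreal (Max (xs ` {1..Mn K ^ k})) \<partial>SS (DD K)))"
      using prophet_slice by (intro sum_mono mult_left_mono) auto
    also have "\<dots> \<le> (\<Sum>k\<le>K. ennreal (wH K k) * (\<integral>\<^sup>+ xs. ennreal (Max (xs ` {1..Mn K ^ k})) \<partial>SS (DD K)))"
      by (intro sum_mono2) auto
    also have "\<dots> = (\<integral>\<^sup>+ x. ennreal (prophet x) \<partial>?J)"
      by (rule prophet_nn[symmetric]) simp
    finally show ?thesis .
  qed
  have "integral\<^sup>L ?J prophet = enn2real (\<integral>\<^sup>+ x. ennreal (prophet x) \<partial>?J)"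
    by (rule integral_eq_nn_integral[OF pm AEnn])
  also have "\<dots> \<ge> enn2real (ennreal ((real K + 1) / 4 * (harm (Suc K) - 1)))"
    using lb ub by (intro enn2real_mono) (auto simp: top_unique intro: le_less_trans)
  also have "enn2real (ennreal ((real K + 1) / 4 * (harm (Suc K) - 1))) = (real K + 1) / 4 * (harm (Suc K) - 1)"
  proof -
    have "0 \<le> (\<Sum>i\<in>{1..K}. 1 / (real i + 1))" by (intro sum_nonneg) simp
    then have "0 \<le> harm (Suc K) - (1::real)" using harm_shift[of K] by linarith
    then show ?thesis by simp
  qed
  finally show ?thesis .
qed

end

lemma int_le_nn:
  fixes f :: "'a \<Rightarrow> real"
  assumes f: "f \<in> borel_measurable M"
  shows "integral\<^sup>L M f \<le> enn2real (\<integral>\<^sup>+ x. ennreal (f x) \<partial>M)"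
proof (cases "integrable M f")
  case True
  have "integral\<^sup>L M f \<le> integral\<^sup>L M (\<lambda>x. max (f x) 0)"
    using True by (intro integral_mono) auto
  also have "\<dots> = enn2real (\<integral>\<^sup>+ x. ennreal (max (f x) 0) \<partial>M)"
    using f by (intro integral_eq_nn_integral) auto
  also have "(\<integral>\<^sup>+ x. ennreal (max (f x) 0) \<partial>M) = (\<integral>\<^sup>+ x. ennreal (f x) \<partial>M)"
    by (simp add: ennreal_max_0)
  finally show ?thesis .
next
  case False
  then show ?thesis by (simp add: not_integrable_integral_eq)
qed

theorem theorem3:
  shows "\<not> (\<exists>c>0::real. \<forall>H D. horizon H \<and> Gbar H \<and> value_dist D \<longrightarrow>
            (\<exists>p::real. integral\<^sup>L (joint D H) (thr_reward p) \<ge> c * integral\<^sup>L (joint D H) prophet))"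
proof
  assume "\<exists>c>0::real. \<forall>H D. horizon H \<and> Gbar H \<and> value_dist D \<longrightarrow>
            (\<exists>p::real. integral\<^sup>L (joint D H) (thr_reward p) \<ge> c * integral\<^sup>L (joint D H) prophet)"
  then obtain c :: real where c: "c > 0" and A: "\<And>H D. horizon H \<Longrightarrow> Gbar H \<Longrightarrow> value_dist D \<Longrightarrow>
            (\<exists>p::real. integral\<^sup>L (joint D H) (thr_reward p) \<ge> c * integral\<^sup>L (joint D H) prophet)"
    by blast
  define K where "K = nat \<lceil>exp (12 / c + 2)\<rceil>"
  have Kge: "exp (12 / c + 2) \<le> real K"
    unfolding K_def by (metis of_nat_nat ceiling_le_zero exp_gt_zero le_of_int_ceiling less_le_not_le linorder_not_le of_int_0_less_iff)
  have K1: "1 \<le> K"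
  proof -
    have "1 \<le> exp (12 / c + 2)" using c by simp
    then have "1 \<le> real K" using Kge by linarith
    then show ?thesis by simp
  qed
  have hK: "12 / c + 1 < harm (Suc K)"
  proof -
    have "12 / c + 2 = ln (exp (12 / c + 2))" by simp
    also have "\<dots> \<le> ln (real K)" using Kge K1 by (subst ln_le_cancel_iff) auto
    also have "\<dots> \<le> ln (real (Suc K) + 1)" using K1 by (subst ln_le_cancel_iff) auto
    also have "\<dots> \<le> harm (Suc K)" by (rule ln_le_harm)
    finally show ?thesis by simp
  qed
  obtain p where p: "c * integral\<^sup>L (joint (DD K) (HH K)) prophet \<le> integral\<^sup>L (joint (DD K) (HH K)) (thr_reward p)"
    using A[OF HH_horizon[OF K1] Gbar_HH[OF K1] value_dist_DD[OF K1]] by blast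
  have tm: "thr_reward p \<in> borel_measurable (joint (DD K) (HH K))"
    using thr_reward_measurable[OF DD_sets[OF K1]] by (simp add: joint_def)
  have S0: "0 \<le> (\<Sum>k\<le>K. wH K k * (ER K p * (\<Sum>i<Mn K ^ k. AR K p ^ i)))"
    using wH_nn[OF K1] ER_nn[OF K1] AR_nn[OF K1]
    by (intro sum_nonneg mult_nonneg_nonneg) auto
  have "integral\<^sup>L (joint (DD K) (HH K)) (thr_reward p) \<le> enn2real (\<integral>\<^sup>+ x. ennreal (thr_reward p x) \<partial>joint (DD K) (HH K))"
    by (rule int_le_nn[OF tm])
  also have "\<dots> = (\<Sum>k\<le>K. wH K k * (ER K p * (\<Sum>i<Mn K ^ k. AR K p ^ i)))"
    unfolding reward_nn[OF K1] using S0 by simp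
  also have "\<dots> \<le> 3 * (real K + 1)" by (rule reward_bound[OF K1])
  finally have up: "integral\<^sup>L (joint (DD K) (HH K)) (thr_reward p) \<le> 3 * (real K + 1)" .
  have lo: "(real K + 1) / 4 * (harm (Suc K) - 1) \<le> integral\<^sup>L (joint (DD K) (HH K)) prophet"
    by (rule prophet_lb[OF K1])
  have "3 * (real K + 1) < c * ((real K + 1) / 4 * (harm (Suc K) - 1))"
  proof -
    have "12 / c < harm (Suc K) - 1" using hK by simp
    then have "c * (12 / c) < c * (harm (Suc K) - 1)" using c by (rule mult_strict_left_mono)
    moreover have "c * (12 / c) = 12" using c by simp
    ultimately have "12 < c * (harm (Suc K) - 1)" by simp
    then have "(real K + 1) * 12 < (real K + 1) * (c * (harm (Suc K) - 1))"
      by (rule mult_strict_left_mono) simp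
    then show ?thesis by (simp add: algebra_simps)
  qed
  also have "\<dots> \<le> c * integral\<^sup>L (joint (DD K) (HH K)) prophet"
    using lo c by simp
  also have "\<dots> \<le> integral\<^sup>L (joint (DD K) (HH K)) (thr_reward p)" by (rule p)
  also have "\<dots> \<le> 3 * (real K + 1)" by (rule up)
  finally show False by simp
qed


end
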